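(* Let $P$ be a finite poset, $P^*\subseteq P$ a set of marked elements with $\min(P)\cup\max(P)\subseteq P^*$, and $\lambda\colon P^*\to\mathbb{Z}$ an integral order-preserving marking such that $(P,\lambda)$ is regular. The following are equivalent: (i) $P$ is a ranked poset and $\lambda=\lambda^r$ for some rank function $r$ of $P$, i.e. $\lambda(a)=r(a)$ for all $a\in P^*$; (ii) for every partition $P\setminus P^*=C\sqcup O$, the polytope $\mathcal{O}_{C,O}(P,\lambda)\subseteq\mathbb{R}^{P\setminus P^*}$ has a unique interior lattice point $\mathbf{u}$, and the translate $\mathcal{O}_{C,O}(P,\lambda)-\mathbf{u}$ is reflexive.
   Context: $p\prec q$ denotes a covering relation. A marked poset $(P,\lambda)$ is regular if for each covering relation $p\prec q$ in $P$ and all $a,b\in P^*$ with $a\le q$ and $p\le b$, we have $a=b$ or $\lambda(a)<\lambda(b)$. A rank function on $P$ is a map $r\colon P\to\mathbb{Z}$ with $r(p)=r(q)-1$ for every covering relation $p\prec q$; $P$ is ranked if one exists. For a partition $P\setminus P^*=C\sqcup O$, $\mathcal{O}_{C,O}(P,\lambda)\subseteq\mathbb{R}^P$ is the set of all $\mathbf{x}$ with: (1) $x_a=\lambda(a)$ for $a\in P^*$; (2) $x_p\ge0$ for $p\in C$; (3) $x_{p_1}+\cdots+x_{p_r}\le x_b-x_a$ for every saturated chain $a\prec p_1\prec\cdots\prec p_r\prec b$ in $P$ with $a,b\in P^*\sqcup O$, all $p_i\in C$, $r\ge0$; it is regarded as a subset of $\mathbb{R}^{P\setminus P^*}$ via projection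 onto unmarked coordinates, with interior and lattice points taken in $\mathbb{R}^{P\setminus P^*}$ and $\mathbb{Z}^{P\setminus P^*}$. A polytope $Q\subseteq\mathbb{R}^n$ is reflexive if $0$ lies in its interior, $Q$ is a lattice polytope, and its polar dual $Q^\circ=\{\alpha\in(\mathbb{R}^n)^*:\alpha(\mathbf{x})\le 1\ \forall\mathbf{x}\in Q\}$ is a lattice polytope. *)

theory Defs
  imports "HOL-Analysis.Analysis"
begin

text \<open>The finite poset P is the finite type 'a with its order. Marked elements: a set
  Pstar; the marking is lam :: 'a => int (only its values on Pstar matter).\<close>

definition covers :: "'a::order \<Rightarrow> 'a \<Rightarrow> bool" where
  "covers p q \<longleftrightarrow> p < q \<and> \<not> (\<exists>z. p < z \<and> z < q)"

definition minimal_elems :: "'a::order set" where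
  "minimal_elems = {p. \<not> (\<exists>q. q < p)}"

definition maximal_elems :: "'a::order set" where
  "maximal_elems = {p. \<not> (\<exists>q. p < q)}"

definition order_preserving_marking :: "'a::order set \<Rightarrow> ('a \<Rightarrow> int) \<Rightarrow> bool" where
  "order_preserving_marking Pstar lam \<longleftrightarrow>
     (\<forall>a\<in>Pstar. \<forall>b\<in>Pstar. a \<le> b \<longrightarrow> lam a \<le> lam b)"

definition regular_marked :: "'a::order set \<Rightarrow> ('a \<Rightarrow> int) \<Rightarrow> bool" where
  "regular_marked Pstar lam \<longleftrightarrow>
     (\<forall>p q. covers p q \<longrightarrow>
        (\<forall>a\<in>Pstar. \<forall>b\<in>Pstar. a \<le> q \<longrightarrow> p \<le> b \<longrightarrow> a = b \<or> lam a < lam b))"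

definition rank_function :: "('a::order \<Rightarrow> int) \<Rightarrow> bool" where
  "rank_function r \<longleftrightarrow> (\<forall>p q. covers p q \<longrightarrow> r p = r q - 1)"

definition ranked :: "'a::order itself \<Rightarrow> bool" where
  "ranked _ \<longleftrightarrow> (\<exists>r::'a \<Rightarrow> int. rank_function r)"

fun cover_chain :: "'a::order list \<Rightarrow> bool" where
  "cover_chain [] = True"
| "cover_chain [x] = True"
| "cover_chain (x # y # zs) = (covers x y \<and> cover_chain (y # zs))"

definition marked_chain_order_polytope_full ::
  "('a::{finite,order}) set \<Rightarrow> ('a \<Rightarrow> int) \<Rightarrow> 'a set \<Rightarrow> 'a set \<Rightarrow> ((real, 'a) vec) set" where
  "marked_chain_order_polytope_full Pstar lam C Op =
     {x. (\<forall>a\<in>Pstar. x $ a = of_int (lam a))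
       \<and> (\<forall>p\<in>C. 0 \<le> x $ p)
       \<and> (\<forall>a b ps. a \<in> Pstar \<union> Op \<longrightarrow> b \<in> Pstar \<union> Op \<longrightarrow> set ps \<subseteq> C \<longrightarrow>
              cover_chain (a # ps @ [b]) \<longrightarrow>
              sum_list (map (\<lambda>p. x $ p) ps) \<le> x $ b - x $ a)}"

text \<open>R^{P \ P*} is realised as the coordinate subspace of (real, 'a) vec where all marked
  coordinates vanish; projection onto the unmarked coordinates.\<close>
definition unmarked_space :: "'a::finite set \<Rightarrow> ((real, 'a) vec) set" where
  "unmarked_space Pstar = {y. \<forall>a\<in>Pstar. y $ a = 0}"

definition proj_unmarked :: "'a::finite set \<Rightarrow> (real, 'a) vec \<Rightarrow> (real, 'a) vec" where
  "proj_unmarked Pstar x = (\<chi> i. if i \<in> Pstar then 0 else x $ i)"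

definition marked_chain_order_polytope ::
  "('a::{finite,order}) set \<Rightarrow> ('a \<Rightarrow> int) \<Rightarrow> 'a set \<Rightarrow> 'a set \<Rightarrow> ((real, 'a) vec) set" where
  "marked_chain_order_polytope Pstar lam C Op =
     proj_unmarked Pstar ` marked_chain_order_polytope_full Pstar lam C Op"

definition integral_vec :: "(real, 'a::finite) vec \<Rightarrow> bool" where
  "integral_vec x \<longleftrightarrow> (\<forall>i. x $ i \<in> \<int>)"

text \<open>Interior taken inside the ambient space R^{P \ P*}.\<close>
definition interior_in :: "'a::finite set \<Rightarrow> ((real, 'a) vec) set \<Rightarrow> ((real, 'a) vec) set" where
  "interior_in Pstar Q = (top_of_set (unmarked_space Pstar)) interior_of Q"

definition lattice_polytope :: "((real, 'a::finite) vec) set \<Rightarrow> bool" where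
  "lattice_polytope Q \<longleftrightarrow> (\<exists>V. finite V \<and> (\<forall>v\<in>V. integral_vec v) \<and> Q = convex hull V)"

text \<open>Polar dual: linear functionals on R^{P \ P*}, represented by vectors in that space
  via the standard inner product.\<close>
definition polar_dual :: "'a::finite set \<Rightarrow> ((real, 'a) vec) set \<Rightarrow> ((real, 'a) vec) set" where
  "polar_dual Pstar Q = {\<alpha> \<in> unmarked_space Pstar. \<forall>x\<in>Q. \<alpha> \<bullet> x \<le> 1}"

definition reflexive_polytope :: "'a::finite set \<Rightarrow> ((real, 'a) vec) set \<Rightarrow> bool" where
  "reflexive_polytope Pstar Q \<longleftrightarrow>
     0 \<in> interior_in Pstar Q \<and> lattice_polytope Q \<and> lattice_polytope (polar_dual Pstar Q)"

end

theory Submission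
  imports Defs
begin

lemma covers_less: "covers p q \<Longrightarrow> p < q"
  by (simp add: covers_def)

lemma cover_chain_Cons2: "cover_chain (x # y # zs) \<longleftrightarrow> covers x y \<and> cover_chain (y # zs)"
  by simp

lemma cover_chain_tl: "cover_chain (x # xs) \<Longrightarrow> cover_chain xs"
  by (cases xs) auto

lemma cover_chain_append:
  "cover_chain (xs @ y # ys) \<longleftrightarrow> cover_chain (xs @ [y]) \<and> cover_chain (y # ys)"
proof (induction xs)
  case Nil
  then show ?case by simp
next
  case (Cons x xs)
  then show ?case by (cases xs) auto
qed

lemma cover_chain_snoc:
  "cover_chain (xs @ [y, z]) \<longleftrightarrow> cover_chain (xs @ [y]) \<and> covers y z"
  using cover_chain_append[of xs y "[z]"] by auto

lemma cover_chain_sorted: "cover_chain xs \<Longrightarrow> sorted_wrt (<) (xs::'a::order list)"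
proof (induction xs rule: cover_chain.induct)
  case (3 x y zs)
  then have "x < y" "sorted_wrt (<) (y # zs)" by (auto simp: covers_def)
  then show ?case by (auto intro: less_trans)
qed auto

lemma sorted_less_distinct: "sorted_wrt (<) (xs::'a::order list) \<Longrightarrow> distinct xs"
  by (induction xs) auto

lemma cover_chain_distinct: "cover_chain (xs::'a::order list) \<Longrightarrow> distinct xs"
  using cover_chain_sorted sorted_less_distinct by blast

lemma cover_chain_hd_less: "cover_chain (a # cs) \<Longrightarrow> z \<in> set cs \<Longrightarrow> a < (z::'a::order)"
  using cover_chain_sorted[of "a # cs"] by auto

lemma cover_chain_le_last: "cover_chain (a # cs) \<Longrightarrow> z \<in> set (a # cs) \<Longrightarrow> z \<le> last (a # cs)"
proof -
  assume h: "cover_chain (a # cs)" "z \<in> set (a # cs)"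
  have s: "sorted_wrt (<) (a # cs)" using cover_chain_sorted[OF h(1)] .
  obtain ys where ys: "a # cs = ys @ [last (a # cs)]"
    by (metis append_butlast_last_id list.distinct(1))
  have "sorted_wrt (<) (ys @ [last (a # cs)])" "z \<in> set (ys @ [last (a # cs)])"
    using s h(2) ys by metis+
  then show ?thesis
    by (auto simp: sorted_wrt_append less_imp_le)
qed

lemma finite_order_cover_chain:
  fixes s t :: "'a::{finite,order}"
  assumes "s \<le> t"
  shows "\<exists>cs. cover_chain (s # cs) \<and> last (s # cs) = t"
  using assms
proof (induction "card {z. s < z \<and> z \<le> t}" arbitrary: s rule: less_induct)
  case less
  show ?case
  proof (cases "s = t")
    case True
    then show ?thesis by (intro exI[of _ "[]"]) simp
  next
    case False
    then have st: "s < t" using less.prems by auto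
    let ?S = "{z. s < z \<and> z \<le> t}"
    have "?S \<noteq> {}" using st by auto
    then obtain c where c: "c \<in> ?S" "\<forall>b\<in>?S. b \<le> c \<longrightarrow> c = b"
      using finite_has_minimal[of ?S] by auto
    have cov: "covers s c"
      unfolding covers_def
    proof (intro conjI notI)
      show "s < c" using c by auto
      assume "\<exists>z. s < z \<and> z < c"
      then obtain z where "s < z" "z < c" by auto
      moreover then have "z \<in> ?S" using c by auto
      ultimately show False using c by fastforce
    qed
    have sub: "{z. c < z \<and> z \<le> t} \<subset> ?S"
      using c by auto
    have "card {z. c < z \<and> z \<le> t} < card ?S"
      by (rule psubset_card_mono) (use sub in auto)
    then obtain cs where "cover_chain (c # cs)" "last (c # cs) = t"
      using less.hyps[of c] c by auto
    then show ?thesis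
      using cov by (intro exI[of _ "c # cs"]) auto
  qed
qed

lemma exists_minimal_below:
  fixes s :: "'a::{finite,order}"
  shows "\<exists>m\<in>minimal_elems. m \<le> s"
proof -
  obtain m where m: "m \<in> {z. z \<le> s}" "\<forall>b\<in>{z. z \<le> s}. b \<le> m \<longrightarrow> m = b"
    using finite_has_minimal[of "{z. z \<le> s}"] by auto
  have "m \<in> minimal_elems"
    unfolding minimal_elems_def using m by (auto intro: order.trans simp: less_le_not_le)
  then show ?thesis using m by auto
qed

lemma exists_maximal_above:
  fixes s :: "'a::{finite,order}"
  shows "\<exists>m\<in>maximal_elems. s \<le> m"
proof -
  obtain m where m: "m \<in> {z. s \<le> z}" "\<forall>b\<in>{z. s \<le> z}. m \<le> b \<longrightarrow> m = b"
    using finite_has_maximal[of "{z. s \<le> z}"] by auto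
  have "m \<in> maximal_elems"
    unfolding maximal_elems_def using m by (auto intro: order.trans simp: less_le_not_le)
  then show ?thesis using m by auto
qed

lemma exists_lower_cover:
  fixes p :: "'a::{finite,order}"
  assumes "p \<notin> minimal_elems"
  shows "\<exists>q. covers q p"
proof -
  from assms obtain q0 where "q0 < p" unfolding minimal_elems_def by auto
  then have ne: "{z. z < p} \<noteq> {}" by auto
  obtain m where m: "m \<in> {z. z < p}" "\<forall>b\<in>{z. z < p}. m \<le> b \<longrightarrow> m = b"
    using finite_has_maximal[OF _ ne] by auto
  have "covers m p" unfolding covers_def
  proof (intro conjI notI)
    show "m < p" using m by auto
    assume "\<exists>z. m < z \<and> z < p"
    then obtain z where "m < z" "z < p" by auto
    then show False using m by fastforce
  qed
  then show ?thesis by blast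
qed

lemma rank_chain:
  assumes r: "rank_function r" and "cover_chain (a # cs)"
  shows "r (last (a # cs)) = r a + int (length cs)"
  using assms(2)
proof (induction cs arbitrary: a)
  case Nil then show ?case by simp
next
  case (Cons c cs)
  then have "covers a c" "cover_chain (c # cs)" by auto
  then show ?case using Cons.IH r unfolding rank_function_def by fastforce
qed

lemma regular_marked_less:
  assumes reg: "regular_marked Pstar lam"
    and a: "a \<in> Pstar" and b: "b \<in> Pstar" and ab: "(a::'a::{finite,order}) < b"
  shows "lam a < lam b"
proof -
  obtain cs where cs: "cover_chain (a # cs)" "last (a # cs) = b"
    using finite_order_cover_chain[of a b] ab by (meson less_imp_le)
  then obtain c cs' where "cs = c # cs'" using ab by (cases cs) auto
  then have "covers a c" "c \<le> b" using cs cover_chain_le_last[of c cs' c]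
    by auto
  moreover have "a \<le> c" using \<open>covers a c\<close> by (simp add: covers_def less_imp_le)
  ultimately show ?thesis using reg a b ab unfolding regular_marked_def
    by (metis less_imp_le less_irrefl)
qed

lemma regular_no_marked_cover:
  assumes reg: "regular_marked Pstar lam" and "covers (a::'a::{finite,order}) b"
  shows "a \<notin> Pstar \<or> b \<notin> Pstar"
proof (rule ccontr)
  assume "\<not> ?thesis"
  then have "a \<in> Pstar" "b \<in> Pstar" by auto
  moreover have "a < b" using assms(2) by (simp add: covers_def)
  ultimately have "lam b < lam a" using reg assms(2) unfolding regular_marked_def
    by (metis less_irrefl order_refl)
  moreover have "lam a < lam b" using regular_marked_less[OF reg \<open>a\<in>Pstar\<close> \<open>b\<in>Pstar\<close> \<open>a<b\<close>] .
  ultimately show False by simp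
qed

lemma segment_sum:
  fixes f :: "'a::{finite,order} \<Rightarrow> 'b::ordered_ab_group_add" and v :: "'a \<Rightarrow> 'b"
  assumes seg: "\<And>a b ps. a \<notin> C \<Longrightarrow> b \<notin> C \<Longrightarrow> set ps \<subseteq> C \<Longrightarrow> cover_chain (a # ps @ [b])
      \<Longrightarrow> sum_list (map f ps) + g \<le> v b - v a"
  shows "a \<notin> C \<Longrightarrow> cs \<noteq> [] \<Longrightarrow> last cs \<notin> C \<Longrightarrow> cover_chain (a # cs) \<Longrightarrow>
    sum_list (map (\<lambda>z. if z \<in> C then f z else g) cs) \<le> v (last cs) - v a"
proof (induction "length cs" arbitrary: a cs rule: less_induct)
  case less
  define ps where "ps = takeWhile (\<lambda>z. z \<in> C) cs"
  define rest where "rest = dropWhile (\<lambda>z. z \<in> C) cs"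
  have cs: "cs = ps @ rest" unfolding ps_def rest_def by simp
  have "rest \<noteq> []"
  proof
    assume "rest = []"
    then have "\<forall>z\<in>set cs. z \<in> C" unfolding rest_def by (simp add: dropWhile_eq_Nil_conv)
    then show False using less.prems by auto
  qed
  then obtain b rest' where rest: "rest = b # rest'" by (cases rest) auto
  have bC: "b \<notin> C" using hd_dropWhile[of "\<lambda>z. z \<in> C" cs] \<open>rest \<noteq> []\<close> rest unfolding rest_def by auto
  have psC: "set ps \<subseteq> C" unfolding ps_def by (auto dest: set_takeWhileD)
  have cc: "cover_chain ((a # ps) @ b # rest')" using less.prems cs rest by simp
  then have c1: "cover_chain (a # ps @ [b])" and c2: "cover_chain (b # rest')"
    using cover_chain_append[of "a # ps" b rest'] by auto
  have s1: "sum_list (map f ps) + g \<le> v b - v a" using seg[OF less.prems(1) bC psC c1] .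
  have mapps: "map (\<lambda>z. if z \<in> C then f z else g) ps = map f ps"
    using psC by (auto intro!: map_cong)
  have sumeq: "sum_list (map (\<lambda>z. if z \<in> C then f z else g) cs)
     = (sum_list (map f ps) + g) + sum_list (map (\<lambda>z. if z \<in> C then f z else g) rest')"
    using bC by (simp add: cs rest mapps add.assoc)
  show ?case
  proof (cases "rest' = []")
    case True
    then have "last cs = b" using cs rest by simp
    then show ?thesis using sumeq True s1 by simp
  next
    case False
    have len: "length rest' < length cs" using cs rest by simp
    have lst: "last rest' = last cs" using cs rest False by simp
    have "sum_list (map (\<lambda>z. if z \<in> C then f z else g) rest') \<le> v (last rest') - v b"
      using less.hyps[OF len bC False _ c2] lst less.prems(3) by simp
    then have "sum_list (map (\<lambda>z. if z \<in> C then f z else g) cs) \<le> (v b - v a) + (v (last cs) - v b)"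
      using sumeq s1 lst add_mono by fastforce
    then show ?thesis by (simp add: algebra_simps)
  qed
qed

definition emb :: "'a::finite set \<Rightarrow> ('a \<Rightarrow> int) \<Rightarrow> (real,'a) vec \<Rightarrow> (real,'a) vec" where
  "emb Pstar lam y = (\<chi> i. if i \<in> Pstar then of_int (lam i) else y $ i)"

definition cfull :: "'a::finite \<Rightarrow> 'a list \<Rightarrow> 'a \<Rightarrow> (real,'a) vec" where
  "cfull a ps b = (\<chi> i. real (count_list ps i) + (if i = a then 1 else 0) - (if i = b then 1 else 0))"

lemma sum_count_list:
  fixes x :: "(real,'a::finite) vec"
  shows "(\<Sum>i\<in>UNIV. real (count_list ps i) * x $ i) = sum_list (map (\<lambda>p. x $ p) ps)"
proof (induction ps)
  case Nil then show ?case by simp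
next
  case (Cons p ps)
  have "(\<Sum>i\<in>UNIV. real (count_list (p # ps) i) * x $ i)
      = (\<Sum>i\<in>UNIV. (if p = i then x $ i else 0) + real (count_list ps i) * x $ i)"
    by (intro sum.cong) (auto simp: algebra_simps)
  also have "\<dots> = x $ p + (\<Sum>i\<in>UNIV. real (count_list ps i) * x $ i)"
    by (simp add: sum.distrib)
  finally show ?case using Cons by simp
qed

lemma cfull_inner: "cfull a ps b \<bullet> x = sum_list (map (\<lambda>p. x $ p) ps) + x $ a - x $ b"
proof -
  have "cfull a ps b \<bullet> x = (\<Sum>i\<in>UNIV. real (count_list ps i) * x $ i + (if i = a then x $ i else 0)
       - (if i = b then x $ i else 0))"
    unfolding inner_vec_def cfull_def by (intro sum.cong) (auto simp: algebra_simps)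
  also have "\<dots> = (\<Sum>i\<in>UNIV. real (count_list ps i) * x $ i) + x $ a - x $ b"
    by (simp add: sum.distrib sum_subtractf)
  finally show ?thesis using sum_count_list by simp
qed

lemma cfull_nth: "cfull a ps b $ i = real (count_list ps i) + (if i = a then 1 else 0) - (if i = b then 1 else 0)"
  by (simp add: cfull_def)

lemma proj_in_U: "proj_unmarked Pstar x \<in> unmarked_space Pstar"
  by (simp add: proj_unmarked_def unmarked_space_def)

lemma proj_inner: "y \<in> unmarked_space Pstar \<Longrightarrow> proj_unmarked Pstar c \<bullet> y = c \<bullet> y"
  unfolding inner_vec_def proj_unmarked_def unmarked_space_def by (intro sum.cong) auto

lemma proj_inner': "y \<in> unmarked_space Pstar \<Longrightarrow> y \<bullet> proj_unmarked Pstar c = y \<bullet> c"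
  using proj_inner by (metis inner_commute)

lemma proj_emb: "y \<in> unmarked_space Pstar \<Longrightarrow> proj_unmarked Pstar (emb Pstar lam y) = y"
  unfolding proj_unmarked_def emb_def unmarked_space_def by (auto simp: vec_eq_iff)

lemma emb_proj: "\<forall>a\<in>Pstar. x $ a = of_int (lam a) \<Longrightarrow> emb Pstar lam (proj_unmarked Pstar x) = x"
  unfolding proj_unmarked_def emb_def by (auto simp: vec_eq_iff)

lemma emb_marked: "a \<in> Pstar \<Longrightarrow> emb Pstar lam y $ a = of_int (lam a)"
  by (simp add: emb_def)

lemma emb_unmarked: "a \<notin> Pstar \<Longrightarrow> emb Pstar lam y $ a = y $ a"
  by (simp add: emb_def)

lemma emb_add: "w \<in> unmarked_space Pstar \<Longrightarrow> emb Pstar lam (y + w) = emb Pstar lam y + w"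
  unfolding emb_def unmarked_space_def by (auto simp: vec_eq_iff)

lemma emb_diff: "y \<in> unmarked_space Pstar \<Longrightarrow> z \<in> unmarked_space Pstar \<Longrightarrow>
   emb Pstar lam y - emb Pstar lam z = y - z"
  unfolding emb_def unmarked_space_def by (auto simp: vec_eq_iff)

lemma U_add: "y \<in> unmarked_space Pstar \<Longrightarrow> z \<in> unmarked_space Pstar \<Longrightarrow> y + z \<in> unmarked_space Pstar"
  and U_diff: "y \<in> unmarked_space Pstar \<Longrightarrow> z \<in> unmarked_space Pstar \<Longrightarrow> y - z \<in> unmarked_space Pstar"
  and U_scale: "y \<in> unmarked_space Pstar \<Longrightarrow> c *\<^sub>R y \<in> unmarked_space Pstar"
  and U_uminus: "y \<in> unmarked_space Pstar \<Longrightarrow> - y \<in> unmarked_space Pstar"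
  and U_zero: "0 \<in> unmarked_space Pstar"
  by (auto simp: unmarked_space_def)

definition Ch :: "'a::{finite,order} set \<Rightarrow> ('a \<times> 'a list \<times> 'a) set" where
  "Ch C = {(a, ps, b). a \<notin> C \<and> b \<notin> C \<and> set ps \<subseteq> C \<and> cover_chain (a # ps @ [b])}"

lemma finite_Ch: "finite (Ch (C::'a::{finite,order} set))"
proof -
  have "Ch C \<subseteq> UNIV \<times> {ps. set ps \<subseteq> UNIV \<and> length ps \<le> CARD('a)} \<times> UNIV"
  proof safe
    fix a ps b assume "(a, ps, b) \<in> Ch C"
    then have "distinct (a # ps @ [b])" unfolding Ch_def using cover_chain_distinct by blast
    then have "distinct ps" by simp
    then have "length ps = card (set ps)" by (simp add: distinct_card)
    also have "\<dots> \<le> CARD('a)" by (rule card_mono) auto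
    finally show "length ps \<le> CARD('a)" .
  qed auto
  moreover have "finite ((UNIV::'a set) \<times> {ps. set ps \<subseteq> (UNIV::'a set) \<and> length ps \<le> CARD('a)} \<times> (UNIV::'a set))"
  proof (intro finite_cartesian_product)
    show "finite {ps. set ps \<subseteq> (UNIV::'a set) \<and> length ps \<le> CARD('a)}"
      by (rule finite_lists_length_le) simp
  qed simp_all
  ultimately show ?thesis by (rule finite_subset)
qed

definition partition_ok :: "'a set \<Rightarrow> 'a set \<Rightarrow> 'a set \<Rightarrow> bool" where
  "partition_ok Pstar C Op \<longleftrightarrow> C \<inter> Op = {} \<and> C \<union> Op = - Pstar"

lemma full_iff:
  assumes "partition_ok Pstar C Op"
  shows "x \<in> marked_chain_order_polytope_full Pstar lam C Op \<longleftrightarrow>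
    (\<forall>a\<in>Pstar. x $ a = of_int (lam a)) \<and> (\<forall>p\<in>C. 0 \<le> x $ p) \<and>
    (\<forall>t\<in>Ch C. cfull (fst t) (fst (snd t)) (snd (snd t)) \<bullet> x \<le> 0)"
proof -
  have PO: "Pstar \<union> Op = - C" using assms unfolding partition_ok_def by auto
  show ?thesis
    unfolding marked_chain_order_polytope_full_def Ch_def cfull_inner PO
    by (auto simp: algebra_simps)
qed

lemma Q_iff:
  "y \<in> marked_chain_order_polytope Pstar lam C Op \<longleftrightarrow>
     y \<in> unmarked_space Pstar \<and> emb Pstar lam y \<in> marked_chain_order_polytope_full Pstar lam C Op"
proof
  assume "y \<in> marked_chain_order_polytope Pstar lam C Op"
  then obtain x where x: "x \<in> marked_chain_order_polytope_full Pstar lam C Op" "y = proj_unmarked Pstar x"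
    unfolding marked_chain_order_polytope_def by auto
  have "emb Pstar lam y = x" using x emb_proj[of Pstar x lam]
    unfolding marked_chain_order_polytope_full_def by auto
  then show "y \<in> unmarked_space Pstar \<and> emb Pstar lam y \<in> marked_chain_order_polytope_full Pstar lam C Op"
    using x proj_in_U by auto
next
  assume "y \<in> unmarked_space Pstar \<and> emb Pstar lam y \<in> marked_chain_order_polytope_full Pstar lam C Op"
  then show "y \<in> marked_chain_order_polytope Pstar lam C Op"
    unfolding marked_chain_order_polytope_def using proj_emb[of y Pstar lam] by (metis image_eqI)
qed

lemma cover_chain_snoc_intro:
  "cover_chain (a # ps) \<Longrightarrow> covers (last (a # ps)) b \<Longrightarrow> cover_chain (a # ps @ [b])"
proof (induction ps arbitrary: a)
  case Nil then show ?case by simp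
next
  case (Cons p ps)
  then show ?case by auto
qed

lemma cover_chain_snoc_dest:
  "cover_chain (a # ps @ [b]) \<Longrightarrow> covers (last (a # ps)) b \<and> cover_chain (a # ps)"
proof (induction ps arbitrary: a)
  case Nil then show ?case by simp
next
  case (Cons p ps)
  then show ?case by auto
qed

lemma cover_chain_join:
  "cover_chain (a # cs1) \<Longrightarrow> last (a # cs1) = s \<Longrightarrow> cover_chain (s # cs2) \<Longrightarrow> cover_chain (a # cs1 @ cs2)"
proof (induction cs1 arbitrary: a)
  case Nil then show ?case by simp
next
  case (Cons c cs)
  then show ?case by (cases cs) auto
qed

lemma sum_list_member_le:
  fixes h :: "'a \<Rightarrow> 'b::ordered_comm_monoid_add"
  shows "z \<in> set xs \<Longrightarrow> (\<And>x. x \<in> set xs \<Longrightarrow> 0 \<le> h x) \<Longrightarrow> h z \<le> sum_list (map h xs)"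
proof (induction xs)
  case Nil then show ?case by simp
next
  case (Cons a xs)
  show ?case
  proof (cases "z = a")
    case True
    have "0 \<le> sum_list (map h xs)" using Cons.prems by (intro sum_list_nonneg) auto
    then show ?thesis using True by (simp add: add_increasing2)
  next
    case False
    then have "h z \<le> sum_list (map h xs)" using Cons by auto
    moreover have "0 \<le> h a" using Cons.prems by auto
    ultimately show ?thesis by (simp add: add_increasing)
  qed
qed

lemma perturb:
  fixes F G :: "'i \<Rightarrow> real"
  assumes "finite I" "\<forall>i\<in>I. F i \<le> 0" "\<forall>i\<in>I. F i = 0 \<longrightarrow> G i = 0"
  shows "\<exists>\<epsilon>>0. \<forall>i\<in>I. \<forall>\<tau>. \<bar>\<tau>\<bar> \<le> \<epsilon> \<longrightarrow> F i + \<tau> * G i \<le> 0"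
  using assms
proof (induction I rule: finite_induct)
  case empty
  then show ?case by (intro exI[of _ 1]) auto
next
  case (insert i I)
  then obtain e where e: "e > 0" "\<forall>j\<in>I. \<forall>\<tau>. \<bar>\<tau>\<bar> \<le> e \<longrightarrow> F j + \<tau> * G j \<le> 0" by auto
  show ?case
  proof (cases "F i = 0")
    case True
    then have "G i = 0" using insert.prems by auto
    then show ?thesis using e True by (intro exI[of _ e]) auto
  next
    case False
    then have Fi: "F i < 0" using insert.prems by auto
    define ei where "ei = - F i / (\<bar>G i\<bar> + 1)"
    have ei: "ei > 0" using Fi unfolding ei_def by (intro divide_pos_pos) auto
    have "F i + \<tau> * G i \<le> 0" if "\<bar>\<tau>\<bar> \<le> ei" for \<tau>
    proof -
      have "\<tau> * G i \<le> \<bar>\<tau>\<bar> * \<bar>G i\<bar>" by (simp add: abs_mult[symmetric])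
      also have "\<dots> \<le> ei * (\<bar>G i\<bar> + 1)" using that
        by (intro mult_mono) auto
      also have "\<dots> = - F i" unfolding ei_def by simp
      finally show ?thesis by simp
    qed
    then show ?thesis using e ei
      by (intro exI[of _ "min e ei"]) auto
  qed
qed

lemma perturb_strict:
  fixes F N :: "'i \<Rightarrow> real"
  assumes "finite I" "\<forall>i\<in>I. F i < 0" "\<forall>i\<in>I. 0 \<le> N i"
  shows "\<exists>e>0. \<forall>i\<in>I. F i + e * N i < 0"
  using assms
proof (induction I rule: finite_induct)
  case empty
  then show ?case by (intro exI[of _ 1]) auto
next
  case (insert i I)
  then obtain e where e: "e > 0" "\<forall>j\<in>I. F j + e * N j < 0" by auto
  define ei where "ei = - F i / (2 * (N i + 1))"
  have Fi: "F i < 0" "0 \<le> N i" using insert.prems by auto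
  have ei: "ei > 0" using Fi unfolding ei_def by (intro divide_pos_pos) auto
  have "min e ei * N i \<le> ei * (N i + 1)" using Fi ei
    by (intro mult_mono) auto
  also have "\<dots> = - F i / 2" unfolding ei_def using Fi by (simp add: field_simps)
  finally have "F i + min e ei * N i < 0" using Fi by simp
  moreover have "F j + min e ei * N j < 0" if "j \<in> I" for j
  proof -
    have "min e ei * N j \<le> e * N j" using insert.prems that by (intro mult_right_mono) auto
    moreover have "F j + e * N j < 0" using e that by blast
    ultimately show ?thesis by linarith
  qed
  ultimately show ?case using e ei by (intro exI[of _ "min e ei"]) auto
qed

lemma card_less_cover:
  fixes q p :: "'a::{finite,order}"
  assumes "covers q p"
  shows "card {z. z < q} < card {z. z < p}"
proof (rule psubset_card_mono)
  have "q < p" using assms by (simp add: covers_def)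
  then show "{z. z < q} \<subset> {z. z < p}" by (auto intro: less_trans)
qed simp

function yfun :: "'a::{finite,order} set \<Rightarrow> (real,'a) vec \<Rightarrow> 'a \<Rightarrow> real" where
  "yfun C x p = (if p \<in> C \<and> (\<exists>q. covers q p) then x $ p + Max (yfun C x ` {q. covers q p}) else x $ p)"
  by auto
termination
  by (relation "Wellfounded.measure (\<lambda>(C,x,p). card {z. z < p})") (auto intro: card_less_cover)

declare yfun.simps[simp del]

lemma yfun_notC: "p \<notin> C \<Longrightarrow> yfun C x p = x $ p"
  by (simp add: yfun.simps)

lemma yfun_C_ge:
  assumes "p \<in> C" "covers q p"
  shows "yfun C x q + x $ p \<le> yfun C x p"
proof -
  have "yfun C x q \<le> Max (yfun C x ` {q. covers q p})"
    using assms by (intro Max_ge) auto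
  then show ?thesis using assms by (subst (2) yfun.simps) auto
qed

lemma yfun_C_eq:
  assumes "p \<in> C" "covers q0 p"
  shows "\<exists>q. covers q p \<and> yfun C x p = x $ p + yfun C x q"
proof -
  have "Max (yfun C x ` {q. covers q p}) \<in> yfun C x ` {q. covers q p}"
    using assms by (intro Max_in) auto
  then obtain q where "covers q p" "Max (yfun C x ` {q. covers q p}) = yfun C x q" by auto
  then show ?thesis using assms by (subst yfun.simps) auto
qed

lemma yfun_chain:
  fixes C :: "'a::{finite,order} set"
  assumes lc: "\<forall>p\<in>C. \<exists>q. covers q p"
  shows "\<exists>a ps. a \<notin> C \<and> set ps \<subseteq> C \<and> cover_chain (a # ps) \<and> last (a # ps) = p
     \<and> yfun C x p = x $ a + sum_list (map (\<lambda>z. x $ z) ps)"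
proof (induction "card {z. z < p}" arbitrary: p rule: less_induct)
  case less
  show ?case
  proof (cases "p \<in> C")
    case False
    then show ?thesis by (intro exI[of _ p] exI[of _ "[]"]) (simp add: yfun_notC)
  next
    case True
    then obtain q0 where "covers q0 p" using lc by auto
    then obtain q where q: "covers q p" "yfun C x p = x $ p + yfun C x q"
      using yfun_C_eq[OF True] by blast
    obtain a ps where aps: "a \<notin> C" "set ps \<subseteq> C" "cover_chain (a # ps)" "last (a # ps) = q"
      "yfun C x q = x $ a + sum_list (map (\<lambda>z. x $ z) ps)"
      using less.hyps[OF card_less_cover[OF q(1)]] by blast
    have "cover_chain (a # ps @ [p])" using cover_chain_snoc_intro[OF aps(3)] aps(4) q(1) by simp
    then show ?thesis using aps True q
      by (intro exI[of _ a] exI[of _ "ps @ [p]"]) auto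
  qed
qed

lemma yfun_le_succ:
  fixes C :: "'a::{finite,order} set"
  assumes lc: "\<forall>p\<in>C. \<exists>q. covers q p"
    and part: "partition_ok Pstar C Op"
    and x: "x \<in> marked_chain_order_polytope_full Pstar lam C Op"
    and l: "covers l b" "b \<notin> C"
  shows "yfun C x l \<le> x $ b"
proof -
  obtain a ps where aps: "a \<notin> C" "set ps \<subseteq> C" "cover_chain (a # ps)" "last (a # ps) = l"
      "yfun C x l = x $ a + sum_list (map (\<lambda>z. x $ z) ps)"
    using yfun_chain[OF lc] by blast
  have "cover_chain (a # ps @ [b])" using cover_chain_snoc_intro[OF aps(3)] aps(4) l by simp
  then have "(a, ps, b) \<in> Ch C" using aps l unfolding Ch_def by auto
  then have "cfull a ps b \<bullet> x \<le> 0" using x full_iff[OF part] by fastforce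
  then show ?thesis using aps(5) by (simp add: cfull_inner)
qed

lemma yfun_tight:
  fixes C :: "'a::{finite,order} set" and g :: "real \<Rightarrow> real" and x :: "(real,'a) vec"
  defines "w \<equiv> (\<lambda>s. g (yfun C x s) - (if s \<in> C then g (yfun C x s - x $ s) else 0))"
  assumes "cover_chain (c # ps)" "set ps \<subseteq> C"
  shows "yfun C x c + sum_list (map (\<lambda>z. x $ z) ps) \<le> yfun C x (last (c # ps)) \<and>
    (yfun C x (last (c # ps)) = yfun C x c + sum_list (map (\<lambda>z. x $ z) ps) \<longrightarrow>
      sum_list (map w ps) = g (yfun C x (last (c # ps))) - g (yfun C x c))"
  using assms(2,3)
proof (induction ps rule: rev_induct)
  case Nil then show ?case by simp
next
  case (snoc p ps)
  let ?l = "last (c # ps)"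
  have cc: "cover_chain (c # ps)" "covers ?l p"
    using cover_chain_snoc_dest[of c ps p] snoc.prems by auto
  have pC: "p \<in> C" "set ps \<subseteq> C" using snoc.prems by auto
  have IH: "yfun C x c + sum_list (map (\<lambda>z. x $ z) ps) \<le> yfun C x ?l \<and>
    (yfun C x ?l = yfun C x c + sum_list (map (\<lambda>z. x $ z) ps) \<longrightarrow>
      sum_list (map w ps) = g (yfun C x ?l) - g (yfun C x c))"
    using snoc.IH cc pC by auto
  have step: "yfun C x ?l + x $ p \<le> yfun C x p" using yfun_C_ge[OF pC(1) cc(2)] .
  have lastp: "last (c # ps @ [p]) = p" by simp
  show ?case
  proof (intro conjI impI)
    show "yfun C x c + sum_list (map (\<lambda>z. x $ z) (ps @ [p])) \<le> yfun C x (last (c # ps @ [p]))"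
      using IH step by simp
  next
    assume eq: "yfun C x (last (c # ps @ [p])) = yfun C x c + sum_list (map (\<lambda>z. x $ z) (ps @ [p]))"
    then have e1: "yfun C x ?l = yfun C x c + sum_list (map (\<lambda>z. x $ z) ps)"
      and e2: "yfun C x p - x $ p = yfun C x ?l"
      using IH step by auto
    have "sum_list (map w (ps @ [p])) = g (yfun C x ?l) - g (yfun C x c) + w p"
      using IH e1 by simp
    also have "w p = g (yfun C x p) - g (yfun C x ?l)" unfolding w_def using pC e2 by simp
    finally show "sum_list (map w (ps @ [p])) = g (yfun C x (last (c # ps @ [p]))) - g (yfun C x c)"
      by simp
  qed
qed

abbreviation ct :: "'a::finite \<times> 'a list \<times> 'a \<Rightarrow> (real,'a) vec" where
  "ct t \<equiv> cfull (fst t) (fst (snd t)) (snd (snd t))"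

lemma part_C_Pstar: "partition_ok Pstar C Op \<Longrightarrow> p \<in> C \<Longrightarrow> p \<notin> Pstar"
  unfolding partition_ok_def by auto

lemma lower_covers_C:
  fixes Pstar :: "'a::{finite,order} set"
  assumes "minimal_elems \<subseteq> Pstar" "partition_ok Pstar C Op"
  shows "\<forall>p\<in>C. \<exists>q. covers q p"
proof
  fix p assume "p \<in> C"
  then have "p \<notin> Pstar" using part_C_Pstar[OF assms(2)] by auto
  then have "p \<notin> minimal_elems" using assms(1) by auto
  then show "\<exists>q. covers q p" by (rule exists_lower_cover)
qed

section \<open>Integrality of extreme points\<close>

lemma extreme_integral:
  fixes Pstar :: "'a::{finite,order} set"
  assumes minP: "minimal_elems \<subseteq> Pstar" and part: "partition_ok Pstar C Op"
    and ext: "y extreme_point_of marked_chain_order_polytope Pstar lam C Op"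
  shows "integral_vec y"
proof (rule ccontr)
  let ?Q = "marked_chain_order_polytope Pstar lam C Op"
  let ?F = "marked_chain_order_polytope_full Pstar lam C Op"
  have yQ: "y \<in> ?Q" using ext by (simp add: extreme_point_of_def)
  define x where "x = emb Pstar lam y"
  have yU: "y \<in> unmarked_space Pstar" and xF: "x \<in> ?F" using yQ unfolding Q_iff x_def by auto
  have lc: "\<forall>p\<in>C. \<exists>q. covers q p" using lower_covers_C[OF minP part] .
  assume "\<not> integral_vec y"
  then obtain s where s: "y $ s \<notin> \<int>" unfolding integral_vec_def by auto
  have sP: "s \<notin> Pstar" using s yU unfolding unmarked_space_def by auto
  have xs: "x $ s \<notin> \<int>" using s sP by (simp add: x_def emb_unmarked)
  define Y where "Y = yfun C x"
  have "\<exists>s0. Y s0 \<notin> \<int>"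
  proof (rule ccontr)
    assume "\<not> ?thesis"
    then have allY: "\<And>z. Y z \<in> \<int>" by auto
    show False
    proof (cases "s \<in> C")
      case False
      then show False using allY[of s] xs by (simp add: Y_def yfun_notC)
    next
      case True
      then obtain q0 where "covers q0 s" using lc by auto
      then obtain q where "yfun C x s = x $ s + yfun C x q" using yfun_C_eq[OF True] by blast
      then have "x $ s = Y s - Y q" unfolding Y_def by linarith
      then have "x $ s \<in> \<int>" using Ints_diff[OF allY[of s] allY[of q]] by simp
      then show False using xs by simp
    qed
  qed
  then obtain s0 where s0: "Y s0 \<notin> \<int>" by auto
  define t where "t = frac (Y s0)"
  have t0: "t \<noteq> 0" using s0 unfolding t_def by simp
  define g where "g = (\<lambda>v. if frac v = t then 1 else (0::real))"
  have gint: "g v = 0" if "v \<in> \<int>" for v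
  proof -
    have "frac v = 0" using that by simp
    then show ?thesis using t0 unfolding g_def by auto
  qed
  define wf where "wf = (\<lambda>s. g (Y s) - (if s \<in> C then g (Y s - x $ s) else 0))"
  define w where "w = (\<chi> s. wf s)"
  have wnth: "w $ s = wf s" for s by (simp add: w_def)
  have YP: "Y a = of_int (lam a)" if "a \<in> Pstar" for a
  proof -
    have "a \<notin> C" using that part unfolding partition_ok_def by auto
    then show ?thesis using that by (simp add: Y_def yfun_notC x_def emb_marked)
  qed
  have wU: "w \<in> unmarked_space Pstar"
    unfolding unmarked_space_def
  proof safe
    fix a assume a: "a \<in> Pstar"
    then have "a \<notin> C" using part unfolding partition_ok_def by auto
    then show "w $ a = 0" using a YP[OF a] gint by (simp add: wnth wf_def)
  qed
  have wnz: "w \<noteq> 0"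
  proof
    assume w0: "w = 0"
    let ?S = "{s. g (Y s) = 1}"
    have "s0 \<in> ?S" unfolding g_def t_def by simp
    then have ne: "?S \<noteq> {}" by blast
    obtain m where m: "m \<in> ?S" "\<forall>b\<in>?S. b \<le> m \<longrightarrow> m = b"
      using finite_has_minimal[OF finite ne] by (elim bexE)
    have wm: "wf m = 0" using w0 wnth[of m] by simp
    show False
    proof (cases "m \<in> C")
      case False
      then show False using wm m(1) unfolding wf_def by simp
    next
      case True
      then obtain q0 where "covers q0 m" using lc by auto
      then obtain q where q: "covers q m" "yfun C x m = x $ m + yfun C x q"
        using yfun_C_eq[OF True] by blast
      have "g (Y m - x $ m) = 1" using wm m(1) True unfolding wf_def by simp
      then have "q \<in> ?S" using q unfolding Y_def by simp
      moreover have "q < m" using q(1) by (simp add: covers_def)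
      ultimately have "m = q" using m(2) by (simp add: less_imp_le)
      then show False using \<open>q < m\<close> by simp
    qed
  qed
  obtain e1 where e1: "e1 > 0" "\<forall>p\<in>C. \<forall>\<tau>. \<bar>\<tau>\<bar> \<le> e1 \<longrightarrow> - (x $ p) + \<tau> * (- (w $ p)) \<le> 0"
  proof -
    have "\<forall>p\<in>C. - (x $ p) \<le> 0" using xF full_iff[OF part] by auto
    moreover have "\<forall>p\<in>C. - (x $ p) = 0 \<longrightarrow> - (w $ p) = 0"
      by (auto simp: wnth wf_def Y_def)
    ultimately show ?thesis using perturb[of C "\<lambda>p. - (x $ p)" "\<lambda>p. - (w $ p)"] that by auto
  qed
  obtain e2 where e2: "e2 > 0" "\<forall>t\<in>Ch C. \<forall>\<tau>. \<bar>\<tau>\<bar> \<le> e2 \<longrightarrow> ct t \<bullet> x + \<tau> * (ct t \<bullet> w) \<le> 0"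
  proof -
    have F0: "\<forall>t\<in>Ch C. ct t \<bullet> x \<le> 0" using xF full_iff[OF part] by auto
    have "ct t \<bullet> w = 0" if tC: "t \<in> Ch C" and tight: "ct t \<bullet> x = 0" for t
    proof -
      obtain a ps b where tt: "t = (a, ps, b)" by (cases t) auto
      have ch: "a \<notin> C" "b \<notin> C" "set ps \<subseteq> C" "cover_chain (a # ps @ [b])"
        using tC tt unfolding Ch_def by auto
      have sum0: "sum_list (map (\<lambda>z. x $ z) ps) + x $ a - x $ b = 0"
        using tight tt by (simp add: cfull_inner)
      have cc: "covers (last (a # ps)) b" "cover_chain (a # ps)"
        using cover_chain_snoc_dest[OF ch(4)] by auto
      have Ya: "Y a = x $ a" and Yb: "Y b = x $ b" using ch by (simp_all add: Y_def yfun_notC)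
      have T: "Y a + sum_list (map (\<lambda>z. x $ z) ps) \<le> Y (last (a # ps)) \<and>
        (Y (last (a # ps)) = Y a + sum_list (map (\<lambda>z. x $ z) ps) \<longrightarrow>
          sum_list (map wf ps) = g (Y (last (a # ps))) - g (Y a))"
        using yfun_tight[OF cc(2) ch(3), where g=g] unfolding Y_def wf_def by simp
      have le: "Y (last (a # ps)) \<le> x $ b"
        using yfun_le_succ[OF lc part xF cc(1) ch(2)] unfolding Y_def by simp
      have eqY: "Y (last (a # ps)) = Y a + sum_list (map (\<lambda>z. x $ z) ps)"
        using T le sum0 Ya by linarith
      have "sum_list (map wf ps) = g (Y (last (a # ps))) - g (Y a)" using T eqY by blast
      moreover have "Y (last (a # ps)) = Y b" using eqY Ya Yb sum0 by linarith
      moreover have "w $ a = g (Y a)" "w $ b = g (Y b)" using ch by (simp_all add: wnth wf_def)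
      moreover have "(\<lambda>z. w $ z) = wf" by (simp add: fun_eq_iff wnth)
      ultimately have "sum_list (map (\<lambda>z. w $ z) ps) + w $ a - w $ b = 0" by simp
      then show ?thesis using tt by (simp add: cfull_inner)
    qed
    then show ?thesis using perturb[OF finite_Ch F0, of "\<lambda>t. ct t \<bullet> w"] that by auto
  qed
  define e where "e = min e1 e2"
  have e: "e > 0" "e \<le> e1" "e \<le> e2" using e1 e2 by (auto simp: e_def)
  have inQ: "y + \<tau> *\<^sub>R w \<in> ?Q" if "\<bar>\<tau>\<bar> \<le> e" for \<tau>
  proof -
    have tw: "\<tau> *\<^sub>R w \<in> unmarked_space Pstar" using wU by (rule U_scale)
    have embeq: "emb Pstar lam (y + \<tau> *\<^sub>R w) = x + \<tau> *\<^sub>R w" using emb_add[OF tw] x_def by simp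
    have "x + \<tau> *\<^sub>R w \<in> ?F"
      unfolding full_iff[OF part]
    proof (intro conjI ballI)
      fix a assume "a \<in> Pstar"
      then show "(x + \<tau> *\<^sub>R w) $ a = of_int (lam a)"
        using xF full_iff[OF part] wU unfolding unmarked_space_def by auto
    next
      fix p assume "p \<in> C"
      then have "- (x $ p) + \<tau> * (- (w $ p)) \<le> 0" using e1 e that by auto
      then show "0 \<le> (x + \<tau> *\<^sub>R w) $ p" by simp
    next
      fix t assume "t \<in> Ch C"
      then have "ct t \<bullet> x + \<tau> * (ct t \<bullet> w) \<le> 0" using e2 e that by auto
      then show "ct t \<bullet> (x + \<tau> *\<^sub>R w) \<le> 0" by (simp add: inner_add_right)
    qed
    then show ?thesis using Q_iff[of "y + \<tau> *\<^sub>R w" Pstar lam C Op] embeq U_add[OF yU tw] by simp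
  qed
  have p1: "y + e *\<^sub>R w \<in> ?Q" using inQ e by auto
  have p2: "y + (- e) *\<^sub>R w \<in> ?Q" using inQ[of "- e"] e by auto
  have d: "(y + e *\<^sub>R w) - (y + (- e) *\<^sub>R w) = (2 * e) *\<^sub>R w"
    by (simp add: scaleR_left_distrib[symmetric])
  have "(2 * e) *\<^sub>R w \<noteq> 0" using wnz e by simp
  then have ne: "y + (- e) *\<^sub>R w \<noteq> y + e *\<^sub>R w" using d by force
  have "midpoint (y + (- e) *\<^sub>R w) (y + e *\<^sub>R w) = y"
    unfolding midpoint_eq_iff by (simp add: algebra_simps)
  then have "y \<in> open_segment (y + (- e) *\<^sub>R w) (y + e *\<^sub>R w)"
    using midpoint_in_open_segment ne by metis
  then show False using ext p1 p2 unfolding extreme_point_of_def by blast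
qed

lemma emb_0_add: "y \<in> unmarked_space Pstar \<Longrightarrow> emb Pstar lam y = emb Pstar lam 0 + y"
  using emb_add[of y Pstar lam 0] by simp

lemma Q_convex:
  assumes part: "partition_ok Pstar C Op"
  shows "convex (marked_chain_order_polytope Pstar lam C Op)"
  unfolding convex_def
proof (intro ballI allI impI)
  fix y z and u v :: real
  assume yQ: "y \<in> marked_chain_order_polytope Pstar lam C Op" and zQ: "z \<in> marked_chain_order_polytope Pstar lam C Op"
    and uv: "0 \<le> u" "0 \<le> v" "u + v = 1"
  have yU: "y \<in> unmarked_space Pstar" and yF: "emb Pstar lam y \<in> marked_chain_order_polytope_full Pstar lam C Op"
    and zU: "z \<in> unmarked_space Pstar" and zF: "emb Pstar lam z \<in> marked_chain_order_polytope_full Pstar lam C Op"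
    using yQ zQ unfolding Q_iff by auto
  have U: "u *\<^sub>R y + v *\<^sub>R z \<in> unmarked_space Pstar" using yU zU by (intro U_add U_scale)
  have E: "emb Pstar lam (u *\<^sub>R y + v *\<^sub>R z) = u *\<^sub>R emb Pstar lam y + v *\<^sub>R emb Pstar lam z"
  proof -
    have "emb Pstar lam (u *\<^sub>R y + v *\<^sub>R z) = emb Pstar lam 0 + (u *\<^sub>R y + v *\<^sub>R z)"
      using emb_0_add[OF U] .
    also have "\<dots> = (u + v) *\<^sub>R emb Pstar lam 0 + (u *\<^sub>R y + v *\<^sub>R z)" using uv by simp
    also have "\<dots> = u *\<^sub>R (emb Pstar lam 0 + y) + v *\<^sub>R (emb Pstar lam 0 + z)"
      by (simp add: algebra_simps)
    finally show ?thesis using emb_0_add[OF yU] emb_0_add[OF zU] by simp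
  qed
  let ?x = "emb Pstar lam y" and ?x' = "emb Pstar lam z"
  have "u *\<^sub>R ?x + v *\<^sub>R ?x' \<in> marked_chain_order_polytope_full Pstar lam C Op"
    unfolding full_iff[OF part]
  proof (intro conjI ballI)
    fix a assume a: "a \<in> Pstar"
    have "(u *\<^sub>R ?x + v *\<^sub>R ?x') $ a = (u + v) * of_int (lam a)"
      using a by (simp add: emb_marked algebra_simps)
    then show "(u *\<^sub>R ?x + v *\<^sub>R ?x') $ a = of_int (lam a)" using uv by simp
  next
    fix p assume "p \<in> C"
    then have "0 \<le> ?x $ p" "0 \<le> ?x' $ p" using yF zF full_iff[OF part] by auto
    then show "0 \<le> (u *\<^sub>R ?x + v *\<^sub>R ?x') $ p" using uv by simp
  next
    fix t assume "t \<in> Ch C"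
    then have "ct t \<bullet> ?x \<le> 0" "ct t \<bullet> ?x' \<le> 0" using yF zF full_iff[OF part] by auto
    then have "u * (ct t \<bullet> ?x) + v * (ct t \<bullet> ?x') \<le> 0" using uv
      by (simp add: add_nonpos_nonpos mult_nonneg_nonpos)
    then show "ct t \<bullet> (u *\<^sub>R ?x + v *\<^sub>R ?x') \<le> 0" by (simp add: inner_add_right)
  qed
  then show "u *\<^sub>R y + v *\<^sub>R z \<in> marked_chain_order_polytope Pstar lam C Op"
    unfolding Q_iff using U E by simp
qed

lemma Q_closed:
  assumes part: "partition_ok Pstar C Op"
  shows "closed (marked_chain_order_polytope Pstar lam C Op)"
proof -
  let ?l = "emb Pstar lam 0"
  have eq: "marked_chain_order_polytope Pstar lam C Op =
     (\<Inter>a\<in>Pstar. {y. axis a 1 \<bullet> y = 0}) \<inter> (\<Inter>p\<in>C. {y. (- axis p 1) \<bullet> y \<le> 0})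
       \<inter> (\<Inter>t\<in>Ch C. {y. ct t \<bullet> y \<le> - (ct t \<bullet> ?l)})"
  proof (intro set_eqI iffI)
    fix y assume "y \<in> marked_chain_order_polytope Pstar lam C Op"
    then have yU: "y \<in> unmarked_space Pstar" and yF: "emb Pstar lam y \<in> marked_chain_order_polytope_full Pstar lam C Op"
      unfolding Q_iff by auto
    have e: "emb Pstar lam y = ?l + y" using emb_0_add[OF yU] .
    show "y \<in> (\<Inter>a\<in>Pstar. {y. axis a 1 \<bullet> y = 0}) \<inter> (\<Inter>p\<in>C. {y. (- axis p 1) \<bullet> y \<le> 0})
       \<inter> (\<Inter>t\<in>Ch C. {y. ct t \<bullet> y \<le> - (ct t \<bullet> ?l)})"
    proof (intro IntI InterI; clarify)
      fix a assume "a \<in> Pstar" then show "axis a 1 \<bullet> y = 0" using yU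
        by (simp add: inner_axis' unmarked_space_def)
    next
      fix p assume p: "p \<in> C"
      then have "0 \<le> (emb Pstar lam y) $ p" using yF full_iff[OF part] by auto
      then show "(- axis p 1) \<bullet> y \<le> 0" using part_C_Pstar[OF part p] by (simp add: inner_axis' emb_unmarked)
    next
      fix t assume "t \<in> Ch C"
      then have "ct t \<bullet> (emb Pstar lam y) \<le> 0" using yF full_iff[OF part] by auto
      then show "ct t \<bullet> y \<le> - (ct t \<bullet> ?l)" using e by (simp add: inner_add_right)
    qed
  next
    fix y assume y: "y \<in> (\<Inter>a\<in>Pstar. {y. axis a 1 \<bullet> y = 0}) \<inter> (\<Inter>p\<in>C. {y. (- axis p 1) \<bullet> y \<le> 0})
       \<inter> (\<Inter>t\<in>Ch C. {y. ct t \<bullet> y \<le> - (ct t \<bullet> ?l)})"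
    have yU: "y \<in> unmarked_space Pstar" using y by (auto simp: unmarked_space_def inner_axis')
    have e: "emb Pstar lam y = ?l + y" using emb_0_add[OF yU] .
    have "emb Pstar lam y \<in> marked_chain_order_polytope_full Pstar lam C Op"
      unfolding full_iff[OF part]
    proof (intro conjI ballI)
      fix a assume "a \<in> Pstar" then show "emb Pstar lam y $ a = of_int (lam a)" by (simp add: emb_marked)
    next
      fix p assume p: "p \<in> C"
      then have "(- axis p 1) \<bullet> y \<le> 0" using y by auto
      then show "0 \<le> emb Pstar lam y $ p" using part_C_Pstar[OF part p] by (simp add: inner_axis' emb_unmarked)
    next
      fix t assume "t \<in> Ch C"
      then have "ct t \<bullet> y \<le> - (ct t \<bullet> ?l)" using y by auto
      then show "ct t \<bullet> emb Pstar lam y \<le> 0" using e by (simp add: inner_add_right)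
    qed
    then show "y \<in> marked_chain_order_polytope Pstar lam C Op" unfolding Q_iff using yU by simp
  qed
  show ?thesis unfolding eq
    by (intro closed_Int closed_INT ballI closed_hyperplane closed_halfspace_le)
qed

lemma coord_bound:
  fixes Pstar :: "'a::{finite,order} set"
  assumes mm: "minimal_elems \<union> maximal_elems \<subseteq> Pstar" and part: "partition_ok Pstar C Op"
    and xF: "x \<in> marked_chain_order_polytope_full Pstar lam C Op" and sP: "s \<notin> Pstar"
  shows "\<bar>x $ s\<bar> \<le> 2 * Max (range (\<lambda>a. \<bar>real_of_int (lam a)\<bar>))"
proof -
  define K where "K = Max (range (\<lambda>a. \<bar>real_of_int (lam a)\<bar>))"
  have K: "\<bar>real_of_int (lam a)\<bar> \<le> K" for a unfolding K_def by (intro Max_ge) auto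
  obtain m where m: "m \<in> minimal_elems" "m \<le> s" using exists_minimal_below by blast
  obtain M where M: "M \<in> maximal_elems" "s \<le> M" using exists_maximal_above by blast
  have mP: "m \<in> Pstar" and MP: "M \<in> Pstar" using m M mm by auto
  have mC: "m \<notin> C" and MC: "M \<notin> C" using mP MP part_C_Pstar[OF part] by auto
  have xm: "x $ m = of_int (lam m)" and xM: "x $ M = of_int (lam M)"
    using xF mP MP full_iff[OF part] by auto
  obtain cs1 where cs1: "cover_chain (m # cs1)" "last (m # cs1) = s" using finite_order_cover_chain[OF m(2)] by blast
  obtain cs2 where cs2: "cover_chain (s # cs2)" "last (s # cs2) = M" using finite_order_cover_chain[OF M(2)] by blast
  have ne1: "cs1 \<noteq> []" using cs1 mP sP by auto
  have ne2: "cs2 \<noteq> []" using cs2 MP sP by auto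
  have seg: "sum_list (map (\<lambda>z. x $ z) ps) + 0 \<le> x $ b - x $ a"
    if "a \<notin> C" "b \<notin> C" "set ps \<subseteq> C" "cover_chain (a # ps @ [b])" for a b ps
  proof -
    have "(a, ps, b) \<in> Ch C" using that unfolding Ch_def by auto
    then have "cfull a ps b \<bullet> x \<le> 0" using xF full_iff[OF part] by fastforce
    then show ?thesis by (simp add: cfull_inner)
  qed
  let ?h = "\<lambda>z. if z \<in> C then x $ z else 0"
  have S: "sum_list (map ?h cs) \<le> x $ last cs - x $ a"
    if "a \<notin> C" "cs \<noteq> []" "last cs \<notin> C" "cover_chain (a # cs)" for a cs
    using segment_sum[of C "\<lambda>z. x $ z" "0::real" "\<lambda>z. x $ z", OF seg] that by blast
  have hnn: "0 \<le> ?h z" for z using xF full_iff[OF part] by auto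
  have sumnn: "0 \<le> sum_list (map ?h xs)" for xs
  proof (rule sum_list_nonneg)
    fix r assume "r \<in> set (map ?h xs)"
    then have "r \<in> ?h ` set xs" by (simp only: set_map)
    then obtain z where "r = ?h z" by (elim imageE)
    then show "0 \<le> r" using hnn[of z] by simp
  qed
  show ?thesis
  proof (cases "s \<in> C")
    case True
    have cc: "cover_chain (m # cs1 @ cs2)" using cover_chain_join[OF cs1 cs2(1)] .
    have lst: "last (cs1 @ cs2) = M" using cs2 ne2 by simp
    have "sum_list (map ?h (cs1 @ cs2)) \<le> x $ M - x $ m"
      using S[OF mC _ _ cc] lst MC ne1 by simp
    moreover have "s \<in> set (cs1 @ cs2)" using cs1 ne1 by (metis Un_iff last_ConsR last_in_set set_append)
    then have "?h s \<le> sum_list (map ?h (cs1 @ cs2))" using hnn by (intro sum_list_member_le) auto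
    moreover have "0 \<le> x $ s" using True hnn[of s] by simp
    ultimately show ?thesis using True xm xM K[of m] K[of M] unfolding K_def[symmetric] by auto
  next
    case False
    have "sum_list (map ?h cs1) \<le> x $ s - x $ m"
      using S[OF mC ne1 _ cs1(1)] cs1 ne1 False by simp
    moreover have "sum_list (map ?h cs2) \<le> x $ M - x $ s"
      using S[OF False ne2 _ cs2(1)] cs2 ne2 MC by simp
    ultimately show ?thesis using sumnn[of cs1] sumnn[of cs2] xm xM K[of m] K[of M]
      unfolding K_def[symmetric] by auto
  qed
qed

lemma Q_bounded_coord:
  fixes Pstar :: "'a::{finite,order} set"
  assumes mm: "minimal_elems \<union> maximal_elems \<subseteq> Pstar" and part: "partition_ok Pstar C Op"
    and yQ: "y \<in> marked_chain_order_polytope Pstar lam C Op"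
  shows "\<bar>y $ s\<bar> \<le> 2 * Max (range (\<lambda>a. \<bar>real_of_int (lam a)\<bar>))"
proof -
  have yU: "y \<in> unmarked_space Pstar" and yF: "emb Pstar lam y \<in> marked_chain_order_polytope_full Pstar lam C Op"
    using yQ unfolding Q_iff by auto
  have K0: "0 \<le> Max (range (\<lambda>a. \<bar>real_of_int (lam a)\<bar>))"
    by (rule order.trans[OF _ Max_ge[of _ "\<bar>real_of_int (lam s)\<bar>"]]) auto
  show ?thesis
  proof (cases "s \<in> Pstar")
    case True then show ?thesis using yU K0 by (simp add: unmarked_space_def)
  next
    case False
    then show ?thesis using coord_bound[OF mm part yF False] by (simp add: emb_unmarked)
  qed
qed

lemma finite_int_vecs:
  fixes B :: real
  shows "finite {v :: (real,'a::finite) vec. integral_vec v \<and> (\<forall>i. \<bar>v $ i\<bar> \<le> B)}"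
proof -
  define S where "S = (real_of_int ` {- \<lceil>B\<rceil> .. \<lceil>B\<rceil>})"
  have fS: "finite S" unfolding S_def by simp
  have "{v :: (real,'a) vec. integral_vec v \<and> (\<forall>i. \<bar>v $ i\<bar> \<le> B)} \<subseteq> vec_lambda ` (PiE UNIV (\<lambda>_. S))"
  proof
    fix v :: "(real,'a) vec" assume v: "v \<in> {v. integral_vec v \<and> (\<forall>i. \<bar>v $ i\<bar> \<le> B)}"
    have "v $ i \<in> S" for i
    proof -
      have "v $ i \<in> \<int>" using v unfolding integral_vec_def by auto
      then obtain k where k: "v $ i = of_int k" by (elim Ints_cases)
      have "\<bar>v $ i\<bar> \<le> B" using v by auto
      then have "\<bar>real_of_int k\<bar> \<le> B" using k by simp
      then have "\<bar>k\<bar> \<le> \<lceil>B\<rceil>" by linarith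
      then have "k \<in> {- \<lceil>B\<rceil> .. \<lceil>B\<rceil>}" by (simp add: abs_le_iff)
      then show ?thesis unfolding S_def using k by (intro image_eqI[of _ _ k]) auto
    qed
    then have "vec_nth v \<in> PiE UNIV (\<lambda>_. S)" by auto
    then show "v \<in> vec_lambda ` (PiE UNIV (\<lambda>_. S))" by (metis image_eqI vec_nth_inverse)
  qed
  moreover have "finite (vec_lambda ` (PiE UNIV (\<lambda>_. S)) :: (real,'a) vec set)"
    using fS by (intro finite_imageI finite_PiE) auto
  ultimately show ?thesis by (rule finite_subset)
qed

lemma Q_lattice:
  fixes Pstar :: "'a::{finite,order} set"
  assumes mm: "minimal_elems \<union> maximal_elems \<subseteq> Pstar" and part: "partition_ok Pstar C Op"
  shows "marked_chain_order_polytope Pstar lam C Op =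
     convex hull {v \<in> marked_chain_order_polytope Pstar lam C Op. integral_vec v}"
    and "finite {v \<in> marked_chain_order_polytope Pstar lam C Op. integral_vec v}"
proof -
  let ?Q = "marked_chain_order_polytope Pstar lam C Op"
  define K where "K = 2 * Max (range (\<lambda>a. \<bar>real_of_int (lam a)\<bar>))"
  have bnd: "\<bar>y $ s\<bar> \<le> K" if "y \<in> ?Q" for y s using Q_bounded_coord[OF mm part that] K_def by simp
  have "?Q \<subseteq> cbox (\<chi> i. - K) (\<chi> i. K)"
    unfolding mem_box_cart subset_iff
  proof (intro allI impI)
    fix y i assume "y \<in> ?Q"
    then have "\<bar>y $ i\<bar> \<le> K" using bnd by auto
    then show "(\<chi> i. - K) $ i \<le> y $ i \<and> y $ i \<le> (\<chi> i. K) $ i" by auto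
  qed
  then have "bounded ?Q" using bounded_cbox bounded_subset by blast
  then have cQ: "compact ?Q" using Q_closed[OF part] compact_eq_bounded_closed by blast
  have "{v \<in> ?Q. integral_vec v} \<subseteq> {v. integral_vec v \<and> (\<forall>i. \<bar>v $ i\<bar> \<le> K)}" using bnd by auto
  then show "finite {v \<in> ?Q. integral_vec v}" using finite_int_vecs finite_subset by blast
  have "?Q = convex hull {x. x extreme_point_of ?Q}"
    by (rule Krein_Milman_Minkowski[OF cQ Q_convex[OF part]])
  also have "\<dots> \<subseteq> convex hull {v \<in> ?Q. integral_vec v}"
  proof (rule hull_mono, safe)
    fix x assume "x extreme_point_of ?Q"
    then show "x \<in> ?Q" "integral_vec x"
      using extreme_integral[of Pstar C Op x lam] mm part by (auto simp: extreme_point_of_def)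
  qed
  finally have "?Q \<subseteq> convex hull {v \<in> ?Q. integral_vec v}" .
  moreover have "convex hull {v \<in> ?Q. integral_vec v} \<subseteq> ?Q"
    by (rule hull_minimal) (auto intro: Q_convex[OF part])
  ultimately show "?Q = convex hull {v \<in> ?Q. integral_vec v}" by blast
qed

lemma interior_inI:
  assumes yU: "y \<in> unmarked_space Pstar" and e: "e > 0"
    and ball: "\<forall>z\<in>unmarked_space Pstar. dist z y < e \<longrightarrow> z \<in> S"
  shows "y \<in> interior_in Pstar S"
proof -
  let ?T = "unmarked_space Pstar \<inter> ball y e"
  have "openin (top_of_set (unmarked_space Pstar)) ?T" by (intro openin_open_Int) auto
  moreover have "?T \<subseteq> S" using ball by (auto simp: dist_commute)
  moreover have "y \<in> ?T" using yU e by auto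
  ultimately show ?thesis unfolding interior_in_def interior_of_def by blast
qed

lemma interior_inD:
  assumes "y \<in> interior_in Pstar S"
  shows "y \<in> unmarked_space Pstar \<and> (\<exists>e>0. \<forall>z\<in>unmarked_space Pstar. dist z y < e \<longrightarrow> z \<in> S)"
proof -
  obtain T where T: "openin (top_of_set (unmarked_space Pstar)) T" "y \<in> T" "T \<subseteq> S"
    using assms unfolding interior_in_def interior_of_def by blast
  then obtain e where "e > 0" "\<forall>z\<in>unmarked_space Pstar. dist z y < e \<longrightarrow> z \<in> T"
    unfolding openin_euclidean_subtopology_iff by blast
  then show ?thesis using T openin_subset[OF T(1)] by auto
qed

lemma strict_interior:
  fixes Pstar :: "'a::{finite,order} set"
  assumes part: "partition_ok Pstar C Op" and yU: "y \<in> unmarked_space Pstar"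
    and sC: "\<forall>p\<in>C. 0 < emb Pstar lam y $ p"
    and sCh: "\<forall>t\<in>Ch C. ct t \<bullet> emb Pstar lam y < 0"
  shows "\<exists>e>0. \<forall>z\<in>unmarked_space Pstar. dist z y < e \<longrightarrow> z \<in> marked_chain_order_polytope Pstar lam C Op"
proof -
  let ?x = "emb Pstar lam y"
  have fC: "finite C" by simp
  obtain e1 where e1: "e1 > 0" "\<forall>p\<in>C. - (?x $ p) + e1 * 1 < 0"
    using perturb_strict[OF fC, where F="\<lambda>p. - (?x $ p)" and N="\<lambda>_. 1"] sC by auto
  obtain e2 where e2: "e2 > 0" "\<forall>t\<in>Ch C. ct t \<bullet> ?x + e2 * norm (ct t) < 0"
    using perturb_strict[OF finite_Ch[of C], where F="\<lambda>t. ct t \<bullet> ?x" and N="\<lambda>t. norm (ct t)"] sCh by auto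
  define e where "e = min e1 e2"
  have e: "e > 0" using e1 e2 by (simp add: e_def)
  have "z \<in> marked_chain_order_polytope Pstar lam C Op" if zU: "z \<in> unmarked_space Pstar" and d: "dist z y < e" for z
  proof -
    have dU: "z - y \<in> unmarked_space Pstar" using zU yU by (rule U_diff)
    have ez: "emb Pstar lam z = ?x + (z - y)" using emb_add[OF dU, where y=y and lam=lam] by simp
    have nd: "norm (z - y) < e" using d by (simp add: dist_norm)
    have "emb Pstar lam z \<in> marked_chain_order_polytope_full Pstar lam C Op"
      unfolding full_iff[OF part]
    proof (intro conjI ballI)
      fix a assume "a \<in> Pstar" then show "emb Pstar lam z $ a = of_int (lam a)" by (simp add: emb_marked)
    next
      fix p assume p: "p \<in> C"
      have "\<bar>(z - y) $ p\<bar> \<le> norm (z - y)" by (rule component_le_norm_cart)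
      moreover have "e \<le> e1" by (simp add: e_def)
      ultimately show "0 \<le> emb Pstar lam z $ p" using e1(2) p nd ez by auto
    next
      fix t assume t: "t \<in> Ch C"
      have "ct t \<bullet> (z - y) \<le> norm (ct t) * norm (z - y)" by (rule norm_cauchy_schwarz)
      also have "\<dots> \<le> norm (ct t) * e2"
        using nd by (intro mult_left_mono) (auto simp: e_def)
      finally have "ct t \<bullet> (z - y) \<le> norm (ct t) * e2" .
      moreover have "ct t \<bullet> emb Pstar lam z = ct t \<bullet> ?x + ct t \<bullet> (z - y)"
        using ez by (simp only: inner_add_right)
      moreover have "ct t \<bullet> ?x + e2 * norm (ct t) < 0" using e2(2) t by blast
      ultimately show "ct t \<bullet> emb Pstar lam z \<le> 0" by (simp add: mult.commute)
    qed
    then show ?thesis unfolding Q_iff using zU by simp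
  qed
  then show ?thesis using e by blast
qed

lemma interior_strict:
  fixes Pstar :: "'a::{finite,order} set"
  assumes part: "partition_ok Pstar C Op" and reg: "regular_marked Pstar lam"
    and yI: "y \<in> interior_in Pstar (marked_chain_order_polytope Pstar lam C Op)"
  shows "(\<forall>p\<in>C. 0 < emb Pstar lam y $ p) \<and> (\<forall>t\<in>Ch C. ct t \<bullet> emb Pstar lam y < 0)"
proof -
  let ?Q = "marked_chain_order_polytope Pstar lam C Op"
  let ?x = "emb Pstar lam y"
  obtain e where yU: "y \<in> unmarked_space Pstar" and e: "e > 0"
    "\<forall>z\<in>unmarked_space Pstar. dist z y < e \<longrightarrow> z \<in> ?Q"
    using interior_inD[OF yI] by blast
  have move: "emb Pstar lam y + (e/2) *\<^sub>R w \<in> marked_chain_order_polytope_full Pstar lam C Op"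
    if wU: "w \<in> unmarked_space Pstar" and nw: "norm w = 1" for w
  proof -
    have sw: "(e/2) *\<^sub>R w \<in> unmarked_space Pstar" using wU by (rule U_scale)
    have "y + (e/2) *\<^sub>R w \<in> ?Q"
      using e(2) U_add[OF yU sw] e(1) nw by (auto simp: dist_norm)
    then show ?thesis unfolding Q_iff using emb_add[OF sw] by simp
  qed
  have axU: "axis p 1 \<in> unmarked_space Pstar" if "p \<notin> Pstar" for p :: 'a
    using that by (auto simp: unmarked_space_def axis_def)
  show ?thesis
  proof (intro conjI ballI)
    fix p assume p: "p \<in> C"
    have pP: "p \<notin> Pstar" using part_C_Pstar[OF part p] .
    have "emb Pstar lam y + (e/2) *\<^sub>R (- axis p 1) \<in> marked_chain_order_polytope_full Pstar lam C Op"
      using move[OF U_uminus[OF axU[OF pP]]] by simp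
    then have "0 \<le> ?x $ p - e/2" using p full_iff[OF part] by auto
    then show "0 < ?x $ p" using e by simp
  next
    fix t assume t: "t \<in> Ch C"
    obtain a ps b where tt: "t = (a, ps, b)" by (cases t) auto
    have ch: "a \<notin> C" "b \<notin> C" "set ps \<subseteq> C" "cover_chain (a # ps @ [b])"
      using t tt unfolding Ch_def by auto
    have dist: "distinct (a # ps @ [b])" using cover_chain_distinct[OF ch(4)] .
    have "\<exists>w. w \<in> unmarked_space Pstar \<and> norm w = 1 \<and> 1 \<le> cfull a ps b \<bullet> w"
    proof (cases ps)
      case (Cons p1 ps')
      have p1C: "p1 \<in> C" using ch Cons by auto
      have p1P: "p1 \<notin> Pstar" using part_C_Pstar[OF part p1C] .
      have "p1 \<noteq> a" "p1 \<noteq> b" using dist Cons by auto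
      moreover have "count_list ps p1 \<ge> 1" using Cons by simp
      ultimately have "1 \<le> cfull a ps b \<bullet> axis p1 1" by (simp add: inner_axis cfull_nth)
      then show ?thesis using axU[OF p1P] by (intro exI[of _ "axis p1 1"]) auto
    next
      case Nil
      then have cov: "covers a b" using ch by simp
      have ab: "a \<noteq> b" using dist by simp
      show ?thesis
      proof (cases "a \<in> Pstar")
        case False
        have "1 \<le> cfull a ps b \<bullet> axis a 1" using Nil ab by (simp add: inner_axis cfull_nth)
        then show ?thesis using axU[OF False] by (intro exI[of _ "axis a 1"]) auto
      next
        case True
        then have bP: "b \<notin> Pstar" using regular_no_marked_cover[OF reg cov] by auto
        have "1 \<le> cfull a ps b \<bullet> (- axis b 1)" using Nil ab by (simp add: inner_axis cfull_nth)
        then show ?thesis using U_uminus[OF axU[OF bP]] by (intro exI[of _ "- axis b 1"]) auto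
      qed
    qed
    then obtain w where w: "w \<in> unmarked_space Pstar" "norm w = 1" "1 \<le> cfull a ps b \<bullet> w" by blast
    have "ct t \<bullet> (?x + (e/2) *\<^sub>R w) \<le> 0" using move[OF w(1,2)] t full_iff[OF part] by auto
    then have "ct t \<bullet> ?x + (e/2) * (cfull a ps b \<bullet> w) \<le> 0" using tt by (simp add: inner_add_right)
    moreover have "0 < (e/2) * (cfull a ps b \<bullet> w)" using e w(3) by simp
    ultimately show "ct t \<bullet> ?x < 0" by linarith
  qed
qed

section \<open>Polar duals\<close>

lemma polar_hull:
  fixes A :: "(real,'a::finite) vec set"
  assumes fA: "finite A" and AU: "A \<subseteq> unmarked_space Pstar"
  shows "polar_dual Pstar {y \<in> unmarked_space Pstar. \<forall>c\<in>A. c \<bullet> y \<le> 1} = convex hull (insert 0 A)"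
proof
  let ?P = "{y \<in> unmarked_space Pstar. \<forall>c\<in>A. c \<bullet> y \<le> 1}"
  have cvx: "convex (polar_dual Pstar ?P)"
  proof (rule convexI)
    fix \<alpha> \<beta> and u v :: real
    assume a: "\<alpha> \<in> polar_dual Pstar ?P" and b: "\<beta> \<in> polar_dual Pstar ?P"
      and uv: "0 \<le> u" "0 \<le> v" "u + v = 1"
    have h: "\<alpha> \<in> unmarked_space Pstar" "\<forall>x\<in>?P. \<alpha> \<bullet> x \<le> 1" "\<beta> \<in> unmarked_space Pstar" "\<forall>x\<in>?P. \<beta> \<bullet> x \<le> 1"
      using a b unfolding polar_dual_def by auto
    have U: "u *\<^sub>R \<alpha> + v *\<^sub>R \<beta> \<in> unmarked_space Pstar" using h by (intro U_add U_scale)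
    have "(u *\<^sub>R \<alpha> + v *\<^sub>R \<beta>) \<bullet> x \<le> 1" if x: "x \<in> ?P" for x
    proof -
      have "\<alpha> \<bullet> x \<le> 1" "\<beta> \<bullet> x \<le> 1" using h x by auto
      then have "u * (\<alpha> \<bullet> x) + v * (\<beta> \<bullet> x) \<le> u * 1 + v * 1" using uv
        by (intro add_mono mult_left_mono) auto
      then show ?thesis using uv by (simp add: inner_add_left)
    qed
    then show "u *\<^sub>R \<alpha> + v *\<^sub>R \<beta> \<in> polar_dual Pstar ?P" using U unfolding polar_dual_def by auto
  qed
  have "insert 0 A \<subseteq> polar_dual Pstar ?P"
    using AU U_zero unfolding polar_dual_def by auto
  then show "convex hull (insert 0 A) \<subseteq> polar_dual Pstar ?P"
    using hull_minimal[of "insert 0 A" "polar_dual Pstar ?P" convex] cvx by blast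
  show "polar_dual Pstar ?P \<subseteq> convex hull (insert 0 A)"
  proof
    fix \<beta> assume \<beta>: "\<beta> \<in> polar_dual Pstar ?P"
    show "\<beta> \<in> convex hull (insert 0 A)"
    proof (rule ccontr)
      assume nb: "\<beta> \<notin> convex hull (insert 0 A)"
      have "compact (convex hull (insert 0 A))" using fA by (intro finite_imp_compact_convex_hull) auto
      then have cl: "closed (convex hull (insert 0 A))" by (rule compact_imp_closed)
      obtain c b where cb: "c \<bullet> \<beta> < b" "\<forall>x\<in>convex hull (insert 0 A). b < c \<bullet> x"
        using separating_hyperplane_closed_point[OF convex_convex_hull cl nb] by blast
      have "0 \<in> convex hull (insert 0 A)" by (rule hull_inc) simp
      then have b0: "b < 0" using cb by auto
      define y where "y = (1 / (- b)) *\<^sub>R proj_unmarked Pstar (- c)"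
      have yU: "y \<in> unmarked_space Pstar" unfolding y_def by (intro U_scale proj_in_U)
      have iy: "\<gamma> \<bullet> y = (- (c \<bullet> \<gamma>)) / (- b)" if "\<gamma> \<in> unmarked_space Pstar" for \<gamma>
        using proj_inner'[OF that, of "- c"] unfolding y_def by (simp add: inner_commute)
      have "y \<in> ?P"
      proof (intro CollectI conjI ballI yU)
        fix \<alpha> assume a: "\<alpha> \<in> A"
        have "b < c \<bullet> \<alpha>" using cb a hull_inc[of \<alpha> "insert 0 A"] by auto
        then have "- (c \<bullet> \<alpha>) < - b" by simp
        have "\<alpha> \<bullet> y = c \<bullet> \<alpha> / b" using iy[of \<alpha>] a AU by auto
        then show "\<alpha> \<bullet> y \<le> 1" using b0 \<open>b < c \<bullet> \<alpha>\<close> by (simp add: divide_le_eq)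
      qed
      then have "\<beta> \<bullet> y \<le> 1" using \<beta> unfolding polar_dual_def by auto
      moreover have "\<beta> \<in> unmarked_space Pstar" using \<beta> unfolding polar_dual_def by auto
      ultimately have "(- (c \<bullet> \<beta>)) / (- b) \<le> 1" using iy by simp
      then have "- (c \<bullet> \<beta>) \<le> - b" using b0 by (simp add: divide_le_eq)
      then show False using cb by simp
    qed
  qed
qed

definition Hs :: "'a::{finite,order} set \<Rightarrow> (real,'a) vec set" where
  "Hs C = (\<lambda>p. - axis p 1) ` C \<union> ct ` Ch C"

lemma finite_Hs: "finite (Hs C)"
  unfolding Hs_def using finite_Ch[of C] by simp

lemma full_iff_H:
  assumes part: "partition_ok Pstar C Op"
  shows "x \<in> marked_chain_order_polytope_full Pstar lam C Op \<longleftrightarrow>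
    (\<forall>a\<in>Pstar. x $ a = of_int (lam a)) \<and> (\<forall>c\<in>Hs C. c \<bullet> x \<le> 0)"
proof -
  have "(\<forall>c\<in>Hs C. c \<bullet> x \<le> 0) \<longleftrightarrow> (\<forall>p\<in>C. 0 \<le> x $ p) \<and> (\<forall>t\<in>Ch C. ct t \<bullet> x \<le> 0)"
  proof
    assume h: "\<forall>c\<in>Hs C. c \<bullet> x \<le> 0"
    have "0 \<le> x $ p" if "p \<in> C" for p
    proof -
      have "- axis p 1 \<in> Hs C" using that unfolding Hs_def by auto
      then show ?thesis using h by (auto simp: inner_axis')
    qed
    moreover have "ct t \<bullet> x \<le> 0" if "t \<in> Ch C" for t
    proof -
      have "ct t \<in> Hs C" using that unfolding Hs_def by auto
      then show ?thesis using h by auto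
    qed
    ultimately show "(\<forall>p\<in>C. 0 \<le> x $ p) \<and> (\<forall>t\<in>Ch C. ct t \<bullet> x \<le> 0)" by auto
  next
    assume "(\<forall>p\<in>C. 0 \<le> x $ p) \<and> (\<forall>t\<in>Ch C. ct t \<bullet> x \<le> 0)"
    then show "\<forall>c\<in>Hs C. c \<bullet> x \<le> 0" unfolding Hs_def by (auto simp: inner_axis')
  qed
  then show ?thesis unfolding full_iff[OF part] by simp
qed

lemma integral_proj: "integral_vec c \<Longrightarrow> integral_vec (proj_unmarked Pstar c)"
  unfolding integral_vec_def proj_unmarked_def by auto

lemma integral_Hs: "c \<in> Hs C \<Longrightarrow> integral_vec c"
  unfolding Hs_def integral_vec_def
  by (auto simp: axis_def cfull_nth)

lemma of_int_sum_list_map: "(\<Sum>z\<leftarrow>xs. (of_int (f z) :: real)) = of_int (\<Sum>z\<leftarrow>xs. f z)"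
  by (induction xs) auto

lemma sum_list_minus_len: "(\<Sum>z\<leftarrow>xs. (h z - 1 :: int)) = (\<Sum>z\<leftarrow>xs. h z) - int (length xs)"
  by (induction xs) auto

lemma sum_list_ge_len: "(\<And>z. 1 \<le> (h z::int)) \<Longrightarrow> int (length xs) \<le> (\<Sum>z\<leftarrow>xs. h z)"
  by (induction xs) (auto, smt (verit))

lemma translate_mem: "y \<in> (\<lambda>x. x - u) ` S \<longleftrightarrow> y + (u::'a::ab_group_add) \<in> S"
proof
  assume "y \<in> (\<lambda>x. x - u) ` S"
  then obtain x where "x \<in> S" "y = x - u" by blast
  then show "y + u \<in> S" by simp
next
  assume "y + u \<in> S"
  moreover have "y = (y + u) - u" by simp
  ultimately show "y \<in> (\<lambda>x. x - u) ` S" by (rule rev_image_eqI)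
qed

lemma sum_list_ones: "(\<forall>z\<in>set xs. f z = (1::real)) \<Longrightarrow> sum_list (map f xs) = real (length xs)"
  by (induction xs) auto

section \<open>The ranked case\<close>

definition uvec :: "'a set \<Rightarrow> 'a set \<Rightarrow> ('a \<Rightarrow> int) \<Rightarrow> (real,'a::finite) vec" where
  "uvec Pstar C r = (\<chi> s. if s \<in> Pstar then 0 else if s \<in> C then 1 else of_int (r s))"

context
  fixes Pstar :: "'a::{finite,order} set" and lam :: "'a \<Rightarrow> int" and r :: "'a \<Rightarrow> int"
    and C Op :: "'a set"
  assumes mm: "minimal_elems \<union> maximal_elems \<subseteq> Pstar"
    and reg: "regular_marked Pstar lam"
    and rk: "rank_function r" and lr: "\<forall>a\<in>Pstar. lam a = r a"
    and part: "partition_ok Pstar C Op"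
begin

abbreviation "uG \<equiv> uvec Pstar C r"
abbreviation "QG \<equiv> marked_chain_order_polytope Pstar lam C Op"

lemma uU: "uG \<in> unmarked_space Pstar"
  by (simp add: uvec_def unmarked_space_def)

lemma u_integral: "integral_vec uG"
  by (simp add: uvec_def integral_vec_def)

lemma embu_notC: "s \<notin> C \<Longrightarrow> emb Pstar lam uG $ s = of_int (r s)"
  using lr by (auto simp: emb_def uvec_def)

lemma embu_C: "s \<in> C \<Longrightarrow> emb Pstar lam uG $ s = 1"
  using part_C_Pstar[OF part] by (auto simp: emb_def uvec_def)

lemma embu_H: "c \<in> Hs C \<Longrightarrow> c \<bullet> emb Pstar lam uG = -1"
proof -
  assume "c \<in> Hs C"
  then consider (a) p where "p \<in> C" "c = - axis p 1" | (b) t where "t \<in> Ch C" "c = ct t"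
    unfolding Hs_def by auto
  then show ?thesis
  proof cases
    case a then show ?thesis by (simp add: inner_axis' embu_C)
  next
    case b
    obtain a ps b' where tt: "t = (a, ps, b')" by (cases t) auto
    have ch: "a \<notin> C" "b' \<notin> C" "set ps \<subseteq> C" "cover_chain (a # ps @ [b'])"
      using b tt unfolding Ch_def by auto
    have "r (last (a # ps @ [b'])) = r a + int (length (ps @ [b']))" by (rule rank_chain[OF rk ch(4)])
    then have rb: "r b' = r a + int (length ps) + 1" by simp
    have "(\<Sum>z\<leftarrow>ps. emb Pstar lam uG $ z) = real (length ps)"
      using ch(3) by (intro sum_list_ones) (auto simp: embu_C)
    then show ?thesis using b tt ch rb by (simp add: cfull_inner embu_notC)
  qed
qed

lemma u_ball: "\<exists>e>0. \<forall>z\<in>unmarked_space Pstar. dist z uG < e \<longrightarrow> z \<in> QG"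
proof (rule strict_interior[OF part uU])
  show "\<forall>p\<in>C. 0 < emb Pstar lam uG $ p" by (simp add: embu_C)
  show "\<forall>t\<in>Ch C. ct t \<bullet> emb Pstar lam uG < 0"
    using embu_H unfolding Hs_def by auto
qed

lemma u_interior: "uG \<in> interior_in Pstar QG"
  using u_ball interior_inI[OF uU] by blast

lemma unique_interior:
  assumes vI: "v \<in> interior_in Pstar QG" and vint: "integral_vec v"
  shows "v = uG"
proof -
  have vU: "v \<in> unmarked_space Pstar" using interior_inD[OF vI] by blast
  let ?V = "emb Pstar lam v"
  have st: "(\<forall>p\<in>C. 0 < ?V $ p) \<and> (\<forall>t\<in>Ch C. ct t \<bullet> ?V < 0)"
    using interior_strict[OF part reg vI] .
  define Vi where "Vi s = \<lfloor>?V $ s\<rfloor>" for s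
  have Vint: "?V $ s \<in> \<int>" for s
    using vint by (cases "s \<in> Pstar") (auto simp: emb_def integral_vec_def)
  have VVi: "?V $ s = of_int (Vi s)" for s unfolding Vi_def using Vint[of s] by (metis floor_of_int Ints_cases)
  have VC: "1 \<le> Vi p" if "p \<in> C" for p using st that VVi[of p] by force
  have seg: "sum_list (map Vi ps) + 1 \<le> Vi b - Vi a"
    if "a \<notin> C" "b \<notin> C" "set ps \<subseteq> C" "cover_chain (a # ps @ [b])" for a b ps
  proof -
    have "(a, ps, b) \<in> Ch C" using that unfolding Ch_def by auto
    then have "cfull a ps b \<bullet> ?V < 0" using st by fastforce
    then have "of_int (sum_list (map Vi ps) + Vi a - Vi b) < (0::real)"
      by (simp add: cfull_inner VVi of_int_sum_list_map)
    then show ?thesis by linarith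
  qed
  let ?h = "\<lambda>z. if z \<in> C then Vi z else 1"
  have S: "sum_list (map ?h cs) \<le> Vi (last cs) - Vi a"
    if "a \<notin> C" "cs \<noteq> []" "last cs \<notin> C" "cover_chain (a # cs)" for a cs
    using segment_sum[of C Vi 1 Vi, OF seg] that by blast
  have h1: "1 \<le> ?h z" for z using VC by auto
  have ViP: "Vi a = r a" if "a \<in> Pstar" for a
    using VVi[of a] that lr by (simp add: emb_marked)
  show "v = uG"
  proof (rule vec_eq_iff[THEN iffD2], rule allI)
    fix s
    show "v $ s = uG $ s"
    proof (cases "s \<in> Pstar")
      case True then show ?thesis using vU uU by (simp add: unmarked_space_def)
    next
      case sP: False
      have vs: "v $ s = of_int (Vi s)" using VVi[of s] sP by (simp add: emb_unmarked)
      obtain m where m: "m \<in> minimal_elems" "m \<le> s" using exists_minimal_below by blast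
      obtain M where M: "M \<in> maximal_elems" "s \<le> M" using exists_maximal_above by blast
      have mP: "m \<in> Pstar" and MP: "M \<in> Pstar" using m M mm by auto
      have mC: "m \<notin> C" and MC: "M \<notin> C" using mP MP part_C_Pstar[OF part] by auto
      obtain cs1 where cs1: "cover_chain (m # cs1)" "last (m # cs1) = s" using finite_order_cover_chain[OF m(2)] by blast
      obtain cs2 where cs2: "cover_chain (s # cs2)" "last (s # cs2) = M" using finite_order_cover_chain[OF M(2)] by blast
      have ne1: "cs1 \<noteq> []" using cs1 mP sP by auto
      have ne2: "cs2 \<noteq> []" using cs2 MP sP by auto
      have r1: "r s = r m + int (length cs1)" using rank_chain[OF rk cs1(1)] cs1(2) by simp
      have r2: "r M = r s + int (length cs2)" using rank_chain[OF rk cs2(1)] cs2(2) by simp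
      show ?thesis
      proof (cases "s \<in> C")
        case True
        have cc: "cover_chain (m # cs1 @ cs2)" using cover_chain_join[OF cs1 cs2(1)] .
        have lst: "last (cs1 @ cs2) = M" using cs2 ne2 by simp
        have "sum_list (map ?h (cs1 @ cs2)) \<le> Vi M - Vi m"
          using S[OF mC _ _ cc] lst MC ne1 by simp
        then have le: "sum_list (map (\<lambda>z. ?h z - 1) (cs1 @ cs2)) \<le> 0"
          using ViP[OF mP] ViP[OF MP] r1 r2 by (simp add: sum_list_minus_len)
        have "s \<in> set (cs1 @ cs2)" using cs1 ne1 by (metis Un_iff last_ConsR last_in_set set_append)
        moreover have h1': "0 \<le> ?h z - 1" for z using h1[of z] by linarith
        ultimately have "?h s - 1 \<le> sum_list (map (\<lambda>z. ?h z - 1) (cs1 @ cs2))"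
          by (rule sum_list_member_le)
        then have "Vi s = 1" using le True h1[of s] by simp
        then show ?thesis using vs True sP by (simp add: uvec_def)
      next
        case False
        have a1: "sum_list (map ?h cs1) \<le> Vi s - Vi m"
          using S[OF mC ne1 _ cs1(1)] cs1 ne1 False by simp
        have a2: "sum_list (map ?h cs2) \<le> Vi M - Vi s"
          using S[OF False ne2 _ cs2(1)] cs2 ne2 MC by simp
        have "int (length cs1) \<le> sum_list (map ?h cs1)" "int (length cs2) \<le> sum_list (map ?h cs2)"
          using h1 by (auto intro: sum_list_ge_len)
        then have "Vi s = r s" using a1 a2 ViP[OF mP] ViP[OF MP] r1 r2 by linarith
        then show ?thesis using vs False sP by (simp add: uvec_def)
      qed
    qed
  qed
qed


lemma translate_char:
  "(\<lambda>x. x - uG) ` QG = {y \<in> unmarked_space Pstar. \<forall>c\<in>(proj_unmarked Pstar ` Hs C). c \<bullet> y \<le> 1}"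
proof (intro set_eqI)
  fix y
  have "y \<in> (\<lambda>x. x - uG) ` QG \<longleftrightarrow> y + uG \<in> QG" by (rule translate_mem)
  also have "\<dots> \<longleftrightarrow> y \<in> unmarked_space Pstar \<and> (\<forall>c\<in>(proj_unmarked Pstar ` Hs C). c \<bullet> y \<le> 1)"
  proof
    assume yu: "y + uG \<in> QG"
    then have yuU: "y + uG \<in> unmarked_space Pstar" and F: "emb Pstar lam (y + uG) \<in> marked_chain_order_polytope_full Pstar lam C Op"
      unfolding Q_iff by auto
    have yU: "y \<in> unmarked_space Pstar" using U_diff[OF yuU uU] by simp
    have e: "emb Pstar lam (y + uG) = emb Pstar lam uG + y" using emb_add[OF yU, where y=uG] by (simp add: add.commute)
    have "c \<bullet> y \<le> 1" if cA: "c \<in> (proj_unmarked Pstar ` Hs C)" for c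
    proof -
      obtain c0 where c0: "c0 \<in> Hs C" "c = proj_unmarked Pstar c0" using cA by blast
      have "c0 \<bullet> (emb Pstar lam uG + y) \<le> 0" using F e c0 full_iff_H[OF part] by auto
      then show ?thesis using c0 embu_H proj_inner[OF yU] by (simp add: inner_add_right)
    qed
    then show "y \<in> unmarked_space Pstar \<and> (\<forall>c\<in>(proj_unmarked Pstar ` Hs C). c \<bullet> y \<le> 1)" using yU by auto
  next
    assume h: "y \<in> unmarked_space Pstar \<and> (\<forall>c\<in>(proj_unmarked Pstar ` Hs C). c \<bullet> y \<le> 1)"
    then have yU: "y \<in> unmarked_space Pstar" by auto
    have e: "emb Pstar lam (y + uG) = emb Pstar lam uG + y" using emb_add[OF yU, where y=uG] by (simp add: add.commute)
    have "emb Pstar lam uG + y \<in> marked_chain_order_polytope_full Pstar lam C Op"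
      unfolding full_iff_H[OF part]
    proof (intro conjI ballI)
      fix a assume "a \<in> Pstar"
      then show "(emb Pstar lam uG + y) $ a = of_int (lam a)" using yU by (simp add: emb_marked unmarked_space_def)
    next
      fix c assume c: "c \<in> Hs C"
      then have "proj_unmarked Pstar c \<bullet> y \<le> 1" using h by auto
      then show "c \<bullet> (emb Pstar lam uG + y) \<le> 0" using c embu_H proj_inner[OF yU] by (simp add: inner_add_right)
    qed
    then show "y + uG \<in> QG" unfolding Q_iff using e U_add[OF yU uU] by simp
  qed
  finally show "y \<in> (\<lambda>x. x - uG) ` QG \<longleftrightarrow> y \<in> {y \<in> unmarked_space Pstar. \<forall>c\<in>(proj_unmarked Pstar ` Hs C). c \<bullet> y \<le> 1}" by simp
qed

lemma reflexive_u: "reflexive_polytope Pstar ((\<lambda>x. x - uG) ` QG)"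
  unfolding reflexive_polytope_def
proof (intro conjI)
  obtain e where e: "e > 0" "\<forall>z\<in>unmarked_space Pstar. dist z uG < e \<longrightarrow> z \<in> QG" using u_ball by blast
  have "\<forall>z\<in>unmarked_space Pstar. dist z 0 < e \<longrightarrow> z \<in> (\<lambda>x. x - uG) ` QG"
  proof (intro ballI impI)
    fix z assume z: "z \<in> unmarked_space Pstar" "dist z 0 < e"
    have "z + uG \<in> QG" using e(2) U_add[OF z(1) uU] z(2) by (simp add: dist_norm)
    then show "z \<in> (\<lambda>x. x - uG) ` QG" using translate_mem by blast
  qed
  then show "0 \<in> interior_in Pstar ((\<lambda>x. x - uG) ` QG)" using interior_inI[OF U_zero e(1)] by blast
next
  let ?V = "{v \<in> QG. integral_vec v}"
  have QV: "QG = convex hull ?V" and fV: "finite ?V" using Q_lattice[OF mm part] by auto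
  have "(\<lambda>x. x - uG) ` QG = (\<lambda>x. - uG + x) ` QG" by (simp add: algebra_simps)
  also have "\<dots> = convex hull ((\<lambda>x. - uG + x) ` ?V)" using QV convex_hull_translation by metis
  finally have eq: "(\<lambda>x. x - uG) ` QG = convex hull ((\<lambda>x. - uG + x) ` ?V)" .
  have "\<forall>v\<in>(\<lambda>x. - uG + x) ` ?V. integral_vec v"
    using u_integral by (auto simp: integral_vec_def)
  then show "lattice_polytope ((\<lambda>x. x - uG) ` QG)"
    unfolding lattice_polytope_def using eq fV by blast
next
  have fA: "finite (proj_unmarked Pstar ` Hs C)" using finite_Hs[of C] by simp
  have AU: "(proj_unmarked Pstar ` Hs C) \<subseteq> unmarked_space Pstar" unfolding Hs_def using proj_in_U by auto
  have "polar_dual Pstar ((\<lambda>x. x - uG) ` QG) = convex hull (insert 0 (proj_unmarked Pstar ` Hs C))"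
    unfolding translate_char using polar_hull[OF fA AU] .
  moreover have "\<forall>v\<in>insert 0 (proj_unmarked Pstar ` Hs C). integral_vec v"
  proof
    fix v assume "v \<in> insert 0 (proj_unmarked Pstar ` Hs C)"
    then show "integral_vec v"
    proof
      assume "v = 0" then show ?thesis by (simp add: integral_vec_def)
    next
      assume "v \<in> proj_unmarked Pstar ` Hs C"
      then obtain c where "c \<in> Hs C" "v = proj_unmarked Pstar c" by blast
      then show ?thesis using integral_Hs integral_proj by blast
    qed
  qed
  ultimately show "lattice_polytope (polar_dual Pstar ((\<lambda>x. x - uG) ` QG))"
    unfolding lattice_polytope_def using fA by blast
qed

lemma i_to_ii:
  "\<exists>uG. {v \<in> interior_in Pstar QG. integral_vec v} = {uG} \<and> reflexive_polytope Pstar ((\<lambda>x. x - uG) ` QG)"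
  using u_interior u_integral unique_interior reflexive_u by (intro exI[of _ uG]) blast

end

section \<open>Strict extension in a finite preorder\<close>

lemma strict_extension:
  fixes le :: "'a::finite \<Rightarrow> 'a \<Rightarrow> bool" and M :: "'a set" and f :: "'a \<Rightarrow> real"
  assumes refl: "\<And>s. le s s" and trans: "\<And>s t v. le s t \<Longrightarrow> le t v \<Longrightarrow> le s v"
    and below: "\<And>s. \<exists>a\<in>M. le a s" and above: "\<And>s. \<exists>b\<in>M. le s b"
    and mono: "\<And>a b. a \<in> M \<Longrightarrow> b \<in> M \<Longrightarrow> le a b \<Longrightarrow> f a \<le> f b"
    and strict: "\<And>a b. a \<in> M \<Longrightarrow> b \<in> M \<Longrightarrow> le a b \<Longrightarrow> \<not> le b a \<Longrightarrow> f a < f b"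
  shows "\<exists>x. (\<forall>a\<in>M. x a = f a) \<and> (\<forall>s t. le s t \<longrightarrow> x s \<le> x t) \<and> (\<forall>s t. le s t \<and> \<not> le t s \<longrightarrow> x s < x t)"
proof -
  define L where "L s = Max (f ` {a\<in>M. le a s})" for s
  define U where "U s = Min (f ` {b\<in>M. le s b})" for s
  define th where "th s = real (card {z. le z s}) / (real CARD('a) + 1)" for s
  have Lne: "{a\<in>M. le a s} \<noteq> {}" for s using below[of s] by auto
  have Une: "{b\<in>M. le s b} \<noteq> {}" for s using above[of s] by auto
  have L_ge: "f a \<le> L s" if "a \<in> M" "le a s" for a s unfolding L_def using that by (intro Max_ge) auto
  have U_le: "U s \<le> f b" if "b \<in> M" "le s b" for b s unfolding U_def using that by (intro Min_le) auto
  have L_in: "\<exists>a\<in>M. le a s \<and> L s = f a" for s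
  proof -
    have "L s \<in> f ` {a\<in>M. le a s}" unfolding L_def using Lne[of s] by (intro Max_in) auto
    then show ?thesis by auto
  qed
  have U_in: "\<exists>b\<in>M. le s b \<and> U s = f b" for s
  proof -
    have "U s \<in> f ` {b\<in>M. le s b}" unfolding U_def using Une[of s] by (intro Min_in) auto
    then show ?thesis by auto
  qed
  have LU: "L s \<le> U s" for s
  proof -
    obtain a where a: "a \<in> M" "le a s" "L s = f a" using L_in by blast
    obtain b where b: "b \<in> M" "le s b" "U s = f b" using U_in by blast
    show ?thesis using a b mono trans by metis
  qed
  have LM: "L a = f a" "U a = f a" if "a \<in> M" for a
  proof -
    obtain a' where a': "a' \<in> M" "le a' a" "L a = f a'" using L_in by blast
    have "f a' \<le> f a" using mono a' that by auto
    moreover have "f a \<le> L a" using L_ge that refl by auto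
    ultimately show "L a = f a" using a' by simp
    obtain b' where b': "b' \<in> M" "le a b'" "U a = f b'" using U_in by blast
    have "f a \<le> f b'" using mono b' that by auto
    moreover have "U a \<le> f a" using U_le that refl by auto
    ultimately show "U a = f a" using b' by simp
  qed
  have Lmono: "L s \<le> L t" if "le s t" for s t
    using L_in[of s] L_ge trans that by metis
  have Umono: "U s \<le> U t" if "le s t" for s t
    using U_in[of t] U_le trans that by metis
  have card_le: "card {z. le z s} \<le> CARD('a)" for s by (rule card_mono) auto
  have th01: "0 < th s" "th s < 1" for s
  proof -
    have "s \<in> {z. le z s}" using refl by auto
    then have "card {z. le z s} > 0" by (auto simp: card_gt_0_iff)
    then show "0 < th s" unfolding th_def by simp
    show "th s < 1" unfolding th_def using card_le[of s] by (simp add: divide_less_eq)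
  qed
  have thmono: "th s \<le> th t" if "le s t" for s t
  proof -
    have "{z. le z s} \<subseteq> {z. le z t}" using trans that by blast
    then have "card {z. le z s} \<le> card {z. le z t}" by (intro card_mono) auto
    then show ?thesis unfolding th_def by (simp add: divide_right_mono)
  qed
  have thstrict: "th s < th t" if "le s t" "\<not> le t s" for s t
  proof -
    have "{z. le z s} \<subset> {z. le z t}" using trans that refl by blast
    then have "card {z. le z s} < card {z. le z t}" by (intro psubset_card_mono) auto
    then show ?thesis unfolding th_def by (simp add: divide_strict_right_mono)
  qed
  define x where "x s = L s + th s * (U s - L s)" for s
  have key: "x t - x s = (L t - L s) * (1 - th t) + (U t - U s) * th t + (th t - th s) * (U s - L s)" for s t
    unfolding x_def by (simp add: algebra_simps)
  have xmono: "x s \<le> x t" if "le s t" for s t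
  proof -
    have "0 \<le> (L t - L s) * (1 - th t)" using Lmono[OF that] th01[of t] by simp
    moreover have "0 \<le> (U t - U s) * th t" using Umono[OF that] th01[of t] by simp
    moreover have "0 \<le> (th t - th s) * (U s - L s)" using thmono[OF that] LU[of s] by simp
    ultimately show ?thesis using key[of t s] by linarith
  qed
  have xstrict: "x s < x t" if st: "le s t" "\<not> le t s" for s t
  proof (cases "L s < U s")
    case True
    have "0 \<le> (L t - L s) * (1 - th t)" using Lmono[OF st(1)] th01[of t] by simp
    moreover have "0 \<le> (U t - U s) * th t" using Umono[OF st(1)] th01[of t] by simp
    moreover have "0 < (th t - th s) * (U s - L s)" using thstrict[OF st] True by simp
    ultimately show ?thesis using key[of t s] by linarith
  next
    case False
    then have eq: "L s = U s" using LU[of s] by simp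
    obtain a where a: "a \<in> M" "le a s" "L s = f a" using L_in by blast
    obtain b where b: "b \<in> M" "le s b" "U s = f b" using U_in by blast
    have "le b a"
    proof (rule ccontr)
      assume "\<not> le b a"
      then have "f a < f b" using strict[OF a(1) b(1)] trans[OF a(2) b(2)] by simp
      then show False using eq a b by simp
    qed
    have xs: "x s = f a" unfolding x_def using eq a by simp
    have Ut: "f a < U t"
    proof -
      obtain b' where b': "b' \<in> M" "le t b'" "U t = f b'" using U_in by blast
      have ab': "le a b'" using trans[OF a(2) trans[OF st(1) b'(2)]] .
      have "\<not> le b' a"
      proof
        assume "le b' a"
        then have "le t s" using trans[OF b'(2) trans[OF \<open>le b' a\<close> a(2)]] by simp
        then show False using st by simp
      qed
      then show ?thesis using strict[OF a(1) b'(1) ab'] b' by simp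
    qed
    have Lt: "f a \<le> L t" using L_ge[OF a(1)] trans[OF a(2) st(1)] by simp
    have "x t = (1 - th t) * L t + th t * U t" unfolding x_def by (simp add: algebra_simps)
    moreover have "(1 - th t) * f a \<le> (1 - th t) * L t" using Lt th01[of t] by (intro mult_left_mono) auto
    moreover have "th t * f a < th t * U t" using Ut th01[of t] by simp
    ultimately have "f a < x t" by (simp add: algebra_simps)
    then show ?thesis using xs by simp
  qed
  show ?thesis
  proof (intro exI[of _ x] conjI allI impI ballI)
    fix a assume "a \<in> M" then show "x a = f a" by (simp add: x_def LM)
  next
    fix s t assume "le s t" then show "x s \<le> x t" by (rule xmono)
  next
    fix s t assume "le s t \<and> \<not> le t s" then show "x s < x t" using xstrict by blast
  qed
qed

lemma Ch_empty: "t \<in> Ch ({}::'a::{finite,order} set) \<longleftrightarrow> (\<exists>a b. t = (a, [], b) \<and> covers a b)"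
  unfolding Ch_def by auto

lemma part0: "partition_ok Pstar {} (- Pstar)"
  unfolding partition_ok_def by auto

lemma int_recip_one:
  fixes D :: real
  assumes "D \<ge> 1" "1 / D \<in> \<int>"
  shows "D = 1"
proof -
  obtain k where k: "1 / D = of_int k" using assms(2) by (elim Ints_cases)
  have "0 < 1 / D" "1 / D \<le> 1" using assms(1) by auto
  then have "0 < k" "k \<le> 1" using k by auto
  then have "k = 1" by simp
  then show ?thesis using k assms(1) by (simp add: field_simps)
qed

context
  fixes Pstar :: "'a::{finite,order} set" and lam :: "'a \<Rightarrow> int" and u :: "(real,'a) vec"
    and p q :: 'a
  assumes mm: "minimal_elems \<union> maximal_elems \<subseteq> Pstar"
    and op: "order_preserving_marking Pstar lam"
    and reg: "regular_marked Pstar lam"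
    and uset: "{v \<in> interior_in Pstar (marked_chain_order_polytope Pstar lam {} (- Pstar)). integral_vec v} = {u}"
    and refl: "reflexive_polytope Pstar ((\<lambda>x. x - u) ` marked_chain_order_polytope Pstar lam {} (- Pstar))"
    and pq: "covers p q"
begin

abbreviation "Q0I \<equiv> marked_chain_order_polytope Pstar lam {} (- Pstar)"
abbreviation "utI \<equiv> emb Pstar lam u"

definition "lep s t \<longleftrightarrow> s \<le> t \<or> (s \<le> q \<and> p \<le> t)"

lemma uI: "u \<in> interior_in Pstar Q0I" and uint: "integral_vec u"
  using uset by auto

lemma uU0: "u \<in> unmarked_space Pstar"
  using interior_inD[OF uI] by blast

lemma u_strict: "covers a b \<Longrightarrow> utI $ a < utI $ b"
proof -
  assume ab: "covers a b"
  have "(a, [], b) \<in> Ch ({}::'a set)" using ab Ch_empty by blast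
  then have "cfull a [] b \<bullet> utI < 0" using interior_strict[OF part0[of Pstar] reg uI] by fastforce
  then show ?thesis by (simp add: cfull_inner)
qed

lemma lep_cover_strict:
  assumes ab: "covers a b" "(a, b) \<noteq> (p, q)"
  shows "\<not> lep b a"
proof
  assume "lep b a"
  have altb: "a < b" using ab by (simp add: covers_def)
  show False
  proof (cases "b \<le> a")
    case True then show False using altb by simp
  next
    case False
    then have "b \<le> q" "p \<le> a" using \<open>lep b a\<close> unfolding lep_def by auto
    have plq: "p < q" using pq by (simp add: covers_def)
    have "a = p"
    proof (rule ccontr)
      assume "a \<noteq> p"
      then have "p < a" using \<open>p \<le> a\<close> by simp
      moreover have "a < q" using altb \<open>b \<le> q\<close> by simp
      ultimately show False using pq unfolding covers_def by blast
    qed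
    moreover have "b = q"
    proof (rule ccontr)
      assume "b \<noteq> q"
      then have "b < q" using \<open>b \<le> q\<close> by simp
      moreover have "p < b" using altb \<open>p \<le> a\<close> by simp
      ultimately show False using pq unfolding covers_def by blast
    qed
    ultimately show False using ab by simp
  qed
qed

lemma ext_exists:
  "\<exists>x. (\<forall>a\<in>Pstar. x a = real_of_int (lam a)) \<and> (\<forall>s t. lep s t \<longrightarrow> x s \<le> x t) \<and>
     (\<forall>s t. lep s t \<and> \<not> lep t s \<longrightarrow> x s < x t)"
proof (rule strict_extension)
  show "lep s s" for s unfolding lep_def by simp
  show "lep s v" if "lep s t" "lep t v" for s t v
    using that unfolding lep_def by (meson order_trans)
  show "\<exists>a\<in>Pstar. lep a s" for s
    using exists_minimal_below[of s] mm unfolding lep_def by blast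
  show "\<exists>b\<in>Pstar. lep s b" for s
    using exists_maximal_above[of s] mm unfolding lep_def by blast
  show "real_of_int (lam a) \<le> real_of_int (lam b)" if "a \<in> Pstar" "b \<in> Pstar" "lep a b" for a b
  proof (cases "a \<le> b")
    case True then show ?thesis using op that unfolding order_preserving_marking_def by auto
  next
    case False
    then have "a \<le> q" "p \<le> b" using that unfolding lep_def by auto
    then have "a = b \<or> lam a < lam b" using reg pq that unfolding regular_marked_def by blast
    then show ?thesis by auto
  qed
  show "real_of_int (lam a) < real_of_int (lam b)" if "a \<in> Pstar" "b \<in> Pstar" "lep a b" "\<not> lep b a" for a b
  proof (cases "a \<le> b")
    case True
    have "a \<noteq> b" using that unfolding lep_def by auto
    then have "a < b" using True by simp
    then show ?thesis using regular_marked_less[OF reg that(1,2)] by simp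
  next
    case False
    then have "a \<le> q" "p \<le> b" using that unfolding lep_def by auto
    then have "a = b \<or> lam a < lam b" using reg pq that unfolding regular_marked_def by blast
    moreover have "a \<noteq> b" using that unfolding lep_def by auto
    ultimately show ?thesis by auto
  qed
qed

lemma cover_gap_one: "utI $ q = utI $ p + 1"
proof -
  obtain x where x: "\<forall>a\<in>Pstar. x a = real_of_int (lam a)" "\<forall>s t. lep s t \<longrightarrow> x s \<le> x t"
     "\<forall>s t. lep s t \<and> \<not> lep t s \<longrightarrow> x s < x t"
    using ext_exists by blast
  define X where "X = (\<chi> s. x s)"
  have Xn: "X $ s = x s" for s by (simp add: X_def)
  have xpq: "x p = x q"
  proof -
    have "lep p q" "lep q p" using pq unfolding lep_def covers_def by auto
    then show ?thesis using x(2) by (meson order_antisym)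
  qed
  have xcov: "x a < x b" if "covers a b" "(a, b) \<noteq> (p, q)" for a b
  proof -
    have "lep a b" using that unfolding lep_def covers_def by auto
    then show ?thesis using x(3) lep_cover_strict[OF that] by blast
  qed
  have xcov': "x a \<le> x b" if "covers a b" for a b
    using x(2) that unfolding lep_def covers_def by auto
  have XF: "X \<in> marked_chain_order_polytope_full Pstar lam {} (- Pstar)"
    unfolding full_iff[OF part0[of Pstar]]
  proof (intro conjI ballI)
    fix a assume "a \<in> Pstar" then show "X $ a = of_int (lam a)" using x(1) by (simp add: Xn)
  next
    fix t assume "t \<in> Ch ({}::'a set)"
    then obtain a b where "t = (a, [], b)" "covers a b" using Ch_empty by blast
    then show "ct t \<bullet> X \<le> 0" using xcov' by (simp add: cfull_inner Xn)
  qed simp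
  define D where "D = utI $ q - utI $ p"
  have D0: "D > 0" using u_strict[OF pq] unfolding D_def by simp
  have utint: "utI $ s \<in> \<int>" for s using uint by (cases "s \<in> Pstar") (auto simp: emb_def integral_vec_def)
  have D1: "D \<ge> 1"
  proof -
    have "D \<in> \<int>" unfolding D_def using utint by (intro Ints_diff)
    then obtain k where "D = of_int k" by (elim Ints_cases)
    then show ?thesis using D0 by simp
  qed
  define l where "l = proj_unmarked Pstar (cfull p [] q)"
  have lU: "l \<in> unmarked_space Pstar" unfolding l_def by (rule proj_in_U)
  have lw: "l \<bullet> w = cfull p [] q \<bullet> w" if "w \<in> unmarked_space Pstar" for w
    unfolding l_def using proj_inner[OF that] .
  have pnq: "p \<noteq> q" using covers_less[OF pq] by (auto simp: order.strict_iff_not)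
  have lnth: "l $ s = (if s \<in> Pstar then 0 else (if s = p then 1 else 0) - (if s = q then 1 else 0))" for s
    unfolding l_def proj_unmarked_def by (simp add: cfull_nth)
  have l0: "l \<noteq> 0"
  proof
    assume "l = 0"
    then have "l $ p = 0" "l $ q = 0" by auto
    then show False using lnth[of p] lnth[of q] pnq regular_no_marked_cover[OF reg pq] by (auto split: if_splits)
  qed
  define z where "z = proj_unmarked Pstar X - u"
  have pXU: "proj_unmarked Pstar X \<in> unmarked_space Pstar" by (rule proj_in_U)
  have embX: "emb Pstar lam (proj_unmarked Pstar X) = X" using XF full_iff[OF part0[of Pstar]] by (intro emb_proj) auto
  have zU: "z \<in> unmarked_space Pstar" unfolding z_def using pXU uU0 by (rule U_diff)
  have zdiff: "z = X - utI" unfolding z_def using emb_diff[OF pXU uU0, of lam] embX by simp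
  have lz: "l \<bullet> z = D" using lw[OF zU] zdiff xpq
    by (simp add: D_def cfull_inner inner_diff_right Xn)
  have PX: "proj_unmarked Pstar X \<in> Q0I" unfolding Q_iff using pXU embX XF by simp
  have zQ: "z \<in> (\<lambda>x. x - u) ` Q0I" using translate_mem[of z u Q0I] PX unfolding z_def by simp
  have pert: "\<exists>\<tau>>0. z + \<tau> *\<^sub>R w \<in> (\<lambda>x. x - u) ` Q0I" if wU: "w \<in> unmarked_space Pstar" and lw0: "l \<bullet> w = 0" for w
  proof -
    have F0: "\<forall>t\<in>Ch ({}::'a set). ct t \<bullet> X \<le> 0" using XF full_iff[OF part0[of Pstar]] by auto
    have "ct t \<bullet> w = 0" if t: "t \<in> Ch ({}::'a set)" and tight: "ct t \<bullet> X = 0" for t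
    proof -
      obtain a b where ab: "t = (a, [], b)" "covers a b" using t Ch_empty by blast
      have "x a = x b" using tight ab by (simp add: cfull_inner Xn)
      then have "(a, b) = (p, q)" using xcov[OF ab(2)] by force
      then show ?thesis using ab lw0 lw[OF wU] by simp
    qed
    then obtain \<epsilon> where eps: "\<epsilon> > 0" "\<forall>t\<in>Ch ({}::'a set). \<forall>\<tau>. \<bar>\<tau>\<bar> \<le> \<epsilon> \<longrightarrow> ct t \<bullet> X + \<tau> * (ct t \<bullet> w) \<le> 0"
      using perturb[OF finite_Ch F0, where G="\<lambda>t. ct t \<bullet> w"] by blast
    have ew: "\<epsilon> *\<^sub>R w \<in> unmarked_space Pstar" using wU by (rule U_scale)
    have "X + \<epsilon> *\<^sub>R w \<in> marked_chain_order_polytope_full Pstar lam {} (- Pstar)"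
      unfolding full_iff[OF part0[of Pstar]]
    proof (intro conjI ballI)
      fix a assume "a \<in> Pstar"
      then show "(X + \<epsilon> *\<^sub>R w) $ a = of_int (lam a)" using x(1) wU by (simp add: Xn unmarked_space_def)
    next
      fix t assume "t \<in> Ch ({}::'a set)"
      then have "ct t \<bullet> X + \<epsilon> * (ct t \<bullet> w) \<le> 0" using eps by auto
      then show "ct t \<bullet> (X + \<epsilon> *\<^sub>R w) \<le> 0" by (simp add: inner_add_right)
    qed simp
    moreover have "emb Pstar lam (proj_unmarked Pstar X + \<epsilon> *\<^sub>R w) = X + \<epsilon> *\<^sub>R w"
      using emb_add[OF ew] embX by simp
    ultimately have "proj_unmarked Pstar X + \<epsilon> *\<^sub>R w \<in> Q0I"
      unfolding Q_iff using U_add[OF pXU ew] by simp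
    moreover have "z + \<epsilon> *\<^sub>R w + u = proj_unmarked Pstar X + \<epsilon> *\<^sub>R w" unfolding z_def by simp
    ultimately have "z + \<epsilon> *\<^sub>R w \<in> (\<lambda>x. x - u) ` Q0I" using translate_mem by metis
    then show ?thesis using eps by blast
  qed
  define \<alpha> where "\<alpha> = (1 / D) *\<^sub>R l"
  have \<alpha>pol: "\<alpha> \<in> polar_dual Pstar ((\<lambda>x. x - u) ` Q0I)"
    unfolding polar_dual_def
  proof (intro CollectI conjI ballI)
    show "\<alpha> \<in> unmarked_space Pstar" unfolding \<alpha>_def using lU by (rule U_scale)
    fix y assume "y \<in> (\<lambda>x. x - u) ` Q0I"
    then have yuQ: "y + u \<in> Q0I" using translate_mem by blast
    then have yuU: "y + u \<in> unmarked_space Pstar" and YF: "emb Pstar lam (y + u) \<in> marked_chain_order_polytope_full Pstar lam {} (- Pstar)"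
      unfolding Q_iff by auto
    have yU: "y \<in> unmarked_space Pstar" using U_diff[OF yuU uU0] by simp
    have "(p, [], q) \<in> Ch ({}::'a set)" using pq Ch_empty by blast
    then have c1: "cfull p [] q \<bullet> emb Pstar lam (y + u) \<le> 0" using YF full_iff[OF part0[of Pstar]] by fastforce
    have "emb Pstar lam (y + u) - utI = y" using emb_diff[OF yuU uU0] by simp
    then have "cfull p [] q \<bullet> y = cfull p [] q \<bullet> emb Pstar lam (y + u) - cfull p [] q \<bullet> utI"
      by (metis inner_diff_right)
    also have "cfull p [] q \<bullet> utI = - D" unfolding D_def by (simp add: cfull_inner)
    finally have "l \<bullet> y \<le> D" using c1 lw[OF yU] by simp
    then show "\<alpha> \<bullet> y \<le> 1" unfolding \<alpha>_def using D0 by (simp add: divide_le_eq)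
  qed
  obtain V where V: "finite V" "\<forall>v\<in>V. integral_vec v" "polar_dual Pstar ((\<lambda>x. x - u) ` Q0I) = convex hull V"
    using refl unfolding reflexive_polytope_def lattice_polytope_def by blast
  have Vpol: "v \<in> polar_dual Pstar ((\<lambda>x. x - u) ` Q0I)" if "v \<in> V" for v
    using V(3) hull_inc[OF that] by simp
  have vz: "v \<bullet> z \<le> 1" if "v \<in> V" for v using Vpol[OF that] zQ unfolding polar_dual_def by auto
  obtain \<mu> where mu: "\<forall>v\<in>V. 0 \<le> \<mu> v" "sum \<mu> V = 1" "(\<Sum>v\<in>V. \<mu> v *\<^sub>R v) = \<alpha>"
    using \<alpha>pol V(3) convex_hull_finite[OF V(1)] by auto
  have az: "\<alpha> \<bullet> z = 1" unfolding \<alpha>_def using lz D0 by simp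
  have "(\<Sum>v\<in>V. \<mu> v * (v \<bullet> z)) = (\<Sum>v\<in>V. \<mu> v *\<^sub>R v) \<bullet> z"
    by (simp add: inner_sum_left)
  then have "(\<Sum>v\<in>V. \<mu> v * (v \<bullet> z)) = 1" using az mu(3) by simp
  moreover have "(\<Sum>v\<in>V. \<mu> v * (1 - v \<bullet> z)) = (\<Sum>v\<in>V. \<mu> v) - (\<Sum>v\<in>V. \<mu> v * (v \<bullet> z))"
    by (simp add: right_diff_distrib sum_subtractf)
  ultimately have s0: "(\<Sum>v\<in>V. \<mu> v * (1 - v \<bullet> z)) = 0"
    using mu(2) by simp
  have nn: "\<forall>v\<in>V. 0 \<le> \<mu> v * (1 - v \<bullet> z)" using mu(1) vz by simp
  have all0: "\<forall>v\<in>V. \<mu> v * (1 - v \<bullet> z) = 0"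
    using sum_nonneg_eq_0_iff[OF V(1), of "\<lambda>v. \<mu> v * (1 - v \<bullet> z)"] nn s0 by simp
  have "\<exists>v0\<in>V. 0 < \<mu> v0"
  proof (rule ccontr)
    assume nex: "\<not> (\<exists>v0\<in>V. 0 < \<mu> v0)"
    have "\<mu> v = 0" if "v \<in> V" for v
    proof -
      have "\<not> 0 < \<mu> v" using nex that by blast
      moreover have "0 \<le> \<mu> v" using mu(1) that by blast
      ultimately show ?thesis by linarith
    qed
    then have "sum \<mu> V = 0" by simp
    then show False using mu(2) by simp
  qed
  then obtain v0 where v0: "v0 \<in> V" "\<mu> v0 > 0" by blast
  have v0z: "v0 \<bullet> z = 1" using all0 v0 by auto
  have v0U: "v0 \<in> unmarked_space Pstar" using Vpol[OF v0(1)] unfolding polar_dual_def by auto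
  have v0w: "v0 \<bullet> w = 0" if wU: "w \<in> unmarked_space Pstar" and lw0: "l \<bullet> w = 0" for w
  proof -
    have le: "v0 \<bullet> w' \<le> 0" if w'U: "w' \<in> unmarked_space Pstar" and lw': "l \<bullet> w' = 0" for w'
    proof -
      obtain \<tau> where t: "\<tau> > 0" "z + \<tau> *\<^sub>R w' \<in> (\<lambda>x. x - u) ` Q0I" using pert[OF w'U lw'] by blast
      then have "v0 \<bullet> (z + \<tau> *\<^sub>R w') \<le> 1" using Vpol[OF v0(1)] unfolding polar_dual_def by auto
      then have "\<tau> * (v0 \<bullet> w') \<le> 0" using v0z by (simp add: inner_add_right)
      then show ?thesis using t(1) by (simp add: mult_le_0_iff)
    qed
    have "v0 \<bullet> w \<le> 0" using le[OF wU lw0] .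
    moreover have "v0 \<bullet> (- w) \<le> 0" using le[OF U_uminus[OF wU]] lw0 by simp
    ultimately show ?thesis by simp
  qed
  have ll: "l \<bullet> l > 0" using l0 by simp
  define k where "k = (v0 \<bullet> l) / (l \<bullet> l)"
  define w0 where "w0 = v0 - k *\<^sub>R l"
  have w0U: "w0 \<in> unmarked_space Pstar" unfolding w0_def using v0U U_scale[OF lU] by (rule U_diff)
  have lw0: "l \<bullet> w0 = 0"
  proof -
    have "l \<bullet> w0 = l \<bullet> v0 - k * (l \<bullet> l)" unfolding w0_def by (simp add: inner_diff_right)
    also have "\<dots> = 0" unfolding k_def using ll by (simp add: inner_commute)
    finally show ?thesis .
  qed
  have "v0 \<bullet> w0 = 0" using v0w[OF w0U lw0] .
  moreover have "w0 \<bullet> w0 = v0 \<bullet> w0 - k * (l \<bullet> w0)" unfolding w0_def by (simp add: inner_diff_left)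
  ultimately have "w0 \<bullet> w0 = 0" using lw0 by simp
  then have "w0 = 0" by simp
  then have v0eq: "v0 = k *\<^sub>R l" unfolding w0_def by simp
  then have "k * D = 1" using v0z lz by simp
  then have "k = 1 / D" using D0 by (simp add: field_simps)
  then have "v0 = \<alpha>" using v0eq unfolding \<alpha>_def by simp
  then have aint: "integral_vec \<alpha>" using V(2) v0(1) by auto
  have "1 / D \<in> \<int>"
  proof (cases "p \<in> Pstar")
    case False
    have "\<alpha> $ p = 1 / D" unfolding \<alpha>_def using lnth[of p] False pnq by simp
    then show ?thesis using aint unfolding integral_vec_def by metis
  next
    case True
    then have qP: "q \<notin> Pstar" using regular_no_marked_cover[OF reg pq] by auto
    have "\<alpha> $ q = - (1 / D)" unfolding \<alpha>_def using lnth[of q] qP pnq by simp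
    then have "- (1 / D) \<in> \<int>" using aint unfolding integral_vec_def by metis
    then show ?thesis using Ints_minus by fastforce
  qed
  then have "D = 1" using int_recip_one D1 by blast
  then show ?thesis unfolding D_def by simp
qed

end

lemma ii_to_i:
  fixes Pstar :: "'a::{finite,order} set" and lam :: "'a \<Rightarrow> int" and u :: "(real,'a) vec"
  assumes mm: "minimal_elems \<union> maximal_elems \<subseteq> Pstar"
    and op: "order_preserving_marking Pstar lam"
    and reg: "regular_marked Pstar lam"
    and uset: "{v \<in> interior_in Pstar (marked_chain_order_polytope Pstar lam {} (- Pstar)). integral_vec v} = {u}"
    and refl: "reflexive_polytope Pstar ((\<lambda>x. x - u) ` marked_chain_order_polytope Pstar lam {} (- Pstar))"
  shows "ranked TYPE('a) \<and> (\<exists>r. rank_function r \<and> (\<forall>a\<in>Pstar. lam a = r a))"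
proof -
  define r where "r s = \<lfloor>emb Pstar lam u $ s\<rfloor>" for s
  have uI: "u \<in> interior_in Pstar (marked_chain_order_polytope Pstar lam {} (- Pstar))"
    and uint: "integral_vec u" using uset by auto
  have utint: "emb Pstar lam u $ s \<in> \<int>" for s
    using uint by (cases "s \<in> Pstar") (auto simp: emb_def integral_vec_def)
  have ur: "emb Pstar lam u $ s = of_int (r s)" for s
    unfolding r_def using utint[of s] by (metis floor_of_int Ints_cases)
  have rk: "rank_function r"
    unfolding rank_function_def
  proof (intro allI impI)
    fix p q :: 'a assume "covers p q"
    then have "emb Pstar lam u $ q = emb Pstar lam u $ p + 1"
      using cover_gap_one[OF mm op reg uset refl] by blast
    then show "r p = r q - 1" using ur[of p] ur[of q] by simp
  qed
  have "lam a = r a" if "a \<in> Pstar" for a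
    using ur[of a] that by (simp add: emb_marked)
  then show ?thesis using rk unfolding ranked_def by blast
qed

theorem theorem3p4:
  fixes Pstar :: "'a::{finite,order} set" and lam :: "'a \<Rightarrow> int"
  assumes "minimal_elems \<union> maximal_elems \<subseteq> Pstar"
    and "order_preserving_marking Pstar lam"
    and "regular_marked Pstar lam"
  shows "(ranked TYPE('a) \<and> (\<exists>r. rank_function r \<and> (\<forall>a\<in>Pstar. lam a = r a)))
     \<longleftrightarrow>
     (\<forall>C Op. C \<inter> Op = {} \<and> C \<union> Op = - Pstar \<longrightarrow>
        (\<exists>u. {v \<in> interior_in Pstar (marked_chain_order_polytope Pstar lam C Op).
                 integral_vec v} = {u}
           \<and> reflexive_polytope Pstar ((\<lambda>x. x - u) ` marked_chain_order_polytope Pstar lam C Op)))"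
proof
  assume "ranked TYPE('a) \<and> (\<exists>r. rank_function r \<and> (\<forall>a\<in>Pstar. lam a = r a))"
  then obtain r where r: "rank_function r" "\<forall>a\<in>Pstar. lam a = r a" by blast
  show "\<forall>C Op. C \<inter> Op = {} \<and> C \<union> Op = - Pstar \<longrightarrow>
        (\<exists>u. {v \<in> interior_in Pstar (marked_chain_order_polytope Pstar lam C Op).
                 integral_vec v} = {u}
           \<and> reflexive_polytope Pstar ((\<lambda>x. x - u) ` marked_chain_order_polytope Pstar lam C Op))"
  proof (intro allI impI)
    fix C Op :: "'a set" assume "C \<inter> Op = {} \<and> C \<union> Op = - Pstar"
    then have part: "partition_ok Pstar C Op" unfolding partition_ok_def by auto
    show "\<exists>u. {v \<in> interior_in Pstar (marked_chain_order_polytope Pstar lam C Op).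
                 integral_vec v} = {u}
           \<and> reflexive_polytope Pstar ((\<lambda>x. x - u) ` marked_chain_order_polytope Pstar lam C Op)"
      by (rule i_to_ii[OF assms(1) assms(3) r(1) r(2) part])
  qed
next
  assume h: "\<forall>C Op. C \<inter> Op = {} \<and> C \<union> Op = - Pstar \<longrightarrow>
        (\<exists>u. {v \<in> interior_in Pstar (marked_chain_order_polytope Pstar lam C Op).
                 integral_vec v} = {u}
           \<and> reflexive_polytope Pstar ((\<lambda>x. x - u) ` marked_chain_order_polytope Pstar lam C Op))"
  have "({}::'a set) \<inter> (- Pstar) = {} \<and> {} \<union> (- Pstar) = - Pstar" by simp
  with h have "\<exists>u. {v \<in> interior_in Pstar (marked_chain_order_polytope Pstar lam {} (- Pstar)).
                 integral_vec v} = {u} \<and>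
      reflexive_polytope Pstar ((\<lambda>x. x - u) ` marked_chain_order_polytope Pstar lam {} (- Pstar))"
    by blast
  then obtain u where "{v \<in> interior_in Pstar (marked_chain_order_polytope Pstar lam {} (- Pstar)).
                 integral_vec v} = {u}"
      "reflexive_polytope Pstar ((\<lambda>x. x - u) ` marked_chain_order_polytope Pstar lam {} (- Pstar))"
    by blast
  then show "ranked TYPE('a) \<and> (\<exists>r. rank_function r \<and> (\<forall>a\<in>Pstar. lam a = r a))"
    using ii_to_i[OF assms] by blast
qed

end
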